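(* Let $k\ge0$, $c>0$, and for each $n$ let $X_n$ be a homogeneous and spatially independent random subcomplex of $\triangle_n$ with $n^{k+1}q_k\to\infty$ and $nr_k\sim c$. Then for every $\varepsilon>0$, \[ \lim_{n\to\infty}\mathbb{P}\left(\frac{\beta_k(X_n)}{f_k(X_n)}<1-\frac{c}{k+2}-\varepsilon\ \Big|\ \dim X_n\ge k\right)=0 . \]
   Context: Homogeneous (law invariant under permutations of $[n]$) and spatially independent ($\mathbb{P}(Y_1\cup Y_2\subset X)\mathbb{P}(Y_1\cap Y_2\subset X)=\mathbb{P}(Y_1\subset X)\mathbb{P}(Y_2\subset X)$ for all subcomplexes) random subcomplexes of $\triangle_n=2^{[n]}$; $q_k=\mathbb{P}(\tau\in X_n)$ for a $k$-simplex $\tau$, $r_k=\mathbb{P}(\sigma\in X_n\mid\tau\in X_n)$ for $\tau\subset\sigma$ a $(k+1)$-simplex. $f_k$ is the number of $k$-simplices and $\beta_k$ the $k$th reduced real Betti number. *)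

theory Defs
  imports "HOL-Probability.Probability" "HOL-Library.Function_Algebras"
begin

(* Vertex set [n] = {0..<n}; the full simplex \<triangle>_n = 2^[n] (including the empty face). *)

definition is_subcomplex :: "nat \<Rightarrow> nat set set \<Rightarrow> bool" where
  "is_subcomplex n Y \<longleftrightarrow> Y \<subseteq> Pow {0..<n} \<and> (\<forall>\<sigma>\<in>Y. \<forall>\<tau>. \<tau> \<subseteq> \<sigma> \<longrightarrow> \<tau> \<in> Y)"

definition fnum :: "nat \<Rightarrow> nat set set \<Rightarrow> nat" where
  "fnum k Y = card {\<sigma>\<in>Y. card \<sigma> = k + 1}"

definition dim_ge :: "nat set set \<Rightarrow> nat \<Rightarrow> bool" where
  "dim_ge Y k \<longleftrightarrow> (\<exists>\<sigma>\<in>Y. k + 1 \<le> card \<sigma>)"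

definition cscale :: "real \<Rightarrow> (nat set \<Rightarrow> real) \<Rightarrow> (nat set \<Rightarrow> real)" where
  "cscale a f = (\<lambda>x. a * f x)"

definition chains :: "nat set set \<Rightarrow> nat \<Rightarrow> (nat set \<Rightarrow> real) set" where
  "chains Y k = {c. \<forall>\<sigma>. c \<sigma> \<noteq> 0 \<longrightarrow> \<sigma> \<in> Y \<and> card \<sigma> = k + 1}"

(* simplicial (augmented) boundary map \<partial>_k : C_k \<rightarrow> C_{k-1}, vertices ordered by <;
   the sign of the face \<sigma> - {v} in \<partial>\<sigma> is (-1)^(#vertices of \<sigma> below v).
   For k = 0 the target is C_{-1} = functions on the empty face, giving reduced homology. *)
definition bdry :: "nat set set \<Rightarrow> nat \<Rightarrow> (nat set \<Rightarrow> real) \<Rightarrow> (nat set \<Rightarrow> real)" where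
  "bdry Y k c = (\<lambda>\<tau>. if \<tau> \<in> Y \<and> card \<tau> = k then
      (\<Sum>v\<in>{v. v \<notin> \<tau> \<and> insert v \<tau> \<in> Y}. (-1) ^ card {u\<in>\<tau>. u < v} * c (insert v \<tau>))
    else 0)"

definition betti :: "nat \<Rightarrow> nat set set \<Rightarrow> nat" where
  "betti k Y = vector_space.dim cscale {c \<in> chains Y k. bdry Y k c = 0}
             - vector_space.dim cscale (bdry Y (k + 1) ` chains Y (k + 1))"

definition homogeneous :: "nat \<Rightarrow> nat set set pmf \<Rightarrow> bool" where
  "homogeneous n X \<longleftrightarrow> (\<forall>\<pi>. \<pi> permutes {0..<n} \<longrightarrow> map_pmf (\<lambda>Y. (\<lambda>\<sigma>. \<pi> ` \<sigma>) ` Y) X = X)"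

definition spatially_independent :: "nat \<Rightarrow> nat set set pmf \<Rightarrow> bool" where
  "spatially_independent n X \<longleftrightarrow> (\<forall>Y1 Y2. is_subcomplex n Y1 \<longrightarrow> is_subcomplex n Y2 \<longrightarrow>
     measure_pmf.prob X {Z. Y1 \<union> Y2 \<subseteq> Z} * measure_pmf.prob X {Z. Y1 \<inter> Y2 \<subseteq> Z}
     = measure_pmf.prob X {Z. Y1 \<subseteq> Z} * measure_pmf.prob X {Z. Y2 \<subseteq> Z})"

(* q_k = P(\<tau> \<in> X) for the k-simplex \<tau> = {0,...,k} (independent of \<tau> by homogeneity) *)
definition qprob :: "nat set set pmf \<Rightarrow> nat \<Rightarrow> real" where
  "qprob X k = measure_pmf.prob X {Z. {0..<k+1} \<in> Z}"

definition rprob :: "nat set set pmf \<Rightarrow> nat \<Rightarrow> real" where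
  "rprob X k = measure_pmf.prob X {Z. {0..<k+2} \<in> Z \<and> {0..<k+1} \<in> Z}
             / measure_pmf.prob X {Z. {0..<k+1} \<in> Z}"

end

theory Submission
  imports Defs
begin


lemma (in vector_space) rank_nullity_le:
  assumes S: "subspace S" "S \<subseteq> span V" "finite V" and lf: "Vector_Spaces.linear scale scale f"
    and W: "f ` S \<subseteq> span W" "finite W"
  shows "dim S \<le> dim {x\<in>S. f x = 0} + card W"
proof -
  interpret L: Vector_Spaces.linear scale scale f by fact
  obtain K where K: "K \<subseteq> {x\<in>S. f x = 0}" "independent K" "{x\<in>S. f x = 0} \<subseteq> span K"
      "card K = dim {x\<in>S. f x = 0}"
    using basis_exists by blast
  have fK: "finite K" using independent_span_bound[OF S(3) K(2)] K(1) S(2) by blast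
  obtain B where B: "B \<subseteq> f ` S" "independent B" "f ` S \<subseteq> span B" "card B = dim (f ` S)"
    using basis_exists by blast
  have fB: "finite B" "card B \<le> card W" using independent_span_bound[OF W(2) B(2)] B(1) W(1) by auto
  obtain D where D: "D \<subseteq> S" "inj_on f D" "B = f ` D" using B(1) subset_image_inj by metis
  have fD: "finite D" "card D = card B" using D fB by (auto simp: finite_image_iff card_image)
  have "S \<subseteq> span (K \<union> D)"
  proof
    fix x assume x: "x \<in> S"
    have "f x \<in> span (f ` D)" using B(3) D(3) x by auto
    then obtain y where y: "y \<in> span D" "f x = f y" using L.span_image by auto
    have yS: "y \<in> S" using span_minimal[OF D(1) S(1)] y(1) by auto
    have "x - y \<in> {x\<in>S. f x = 0}" using x yS y(2) S(1) by (auto simp: subspace_diff L.diff)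
    then have "x - y \<in> span (K \<union> D)" using K(3) span_mono[of K "K \<union> D"] by auto
    moreover have "y \<in> span (K \<union> D)" using y(1) span_mono[of D "K \<union> D"] by auto
    ultimately have "(x - y) + y \<in> span (K \<union> D)" by (rule span_add)
    then show "x \<in> span (K \<union> D)" by simp
  qed
  then have "dim S \<le> card (K \<union> D)" using dim_le_card fK fD by blast
  also have "\<dots> \<le> card K + card D" by (rule card_Un_le)
  finally show ?thesis using K(4) fD fB by linarith
qed

interpretation CV: vector_space cscale
  by unfold_locales (auto simp: cscale_def fun_eq_iff algebra_simps)

definition ind :: "nat set \<Rightarrow> nat set \<Rightarrow> real" where
  "ind \<sigma> = (\<lambda>x. if x = \<sigma> then 1 else 0)"

lemma inj_ind: "inj ind"
  by (rule injI) (auto simp: ind_def fun_eq_iff split: if_splits)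

lemma sum_fun_apply: "(\<Sum>i\<in>A. f i) x = (\<Sum>i\<in>A. f i x)"
  by (induction A rule: infinite_finite_induct) auto

lemma supp_in_span:
  assumes "finite T"
  shows "{g::nat set \<Rightarrow> real. \<forall>\<tau>. g \<tau> \<noteq> 0 \<longrightarrow> \<tau> \<in> T} \<subseteq> CV.span (ind ` T)"
proof
  fix g :: "nat set \<Rightarrow> real" assume g: "g \<in> {g. \<forall>\<tau>. g \<tau> \<noteq> 0 \<longrightarrow> \<tau> \<in> T}"
  have "g = (\<Sum>\<sigma>\<in>T. cscale (g \<sigma>) (ind \<sigma>))"
  proof
    fix x
    have "(\<Sum>\<sigma>\<in>T. cscale (g \<sigma>) (ind \<sigma>)) x = (\<Sum>\<sigma>\<in>T. g \<sigma> * ind \<sigma> x)"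
      by (simp add: sum_fun_apply cscale_def)
    also have "\<dots> = g x" using g assms
      by (auto simp: ind_def if_distrib sum.delta cong: if_cong)
    finally show "g x = (\<Sum>\<sigma>\<in>T. cscale (g \<sigma>) (ind \<sigma>)) x" by simp
  qed
  also have "\<dots> \<in> CV.span (ind ` T)"
    by (intro CV.span_sum CV.span_scale CV.span_base) auto
  finally show "g \<in> CV.span (ind ` T)" .
qed

lemma ind_independent: "CV.independent (ind ` T)"
  unfolding CV.independent_explicit_finite_subsets
proof (intro allI impI ballI)
  fix S u v assume S: "S \<subseteq> ind ` T" "finite S" and eq: "(\<Sum>v\<in>S. cscale (u v) v) = 0" and v: "v \<in> S"
  obtain \<sigma> where \<sigma>: "v = ind \<sigma>" using S v by auto
  have "0 = (\<Sum>w\<in>S. cscale (u w) w) \<sigma>" using eq by simp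
  also have "\<dots> = (\<Sum>w\<in>S. u w * w \<sigma>)" by (simp add: sum_fun_apply cscale_def)
  also have "\<dots> = (\<Sum>w\<in>S. if w = v then u w else 0)"
  proof (rule sum.cong)
    fix w assume w: "w \<in> S"
    then obtain \<rho> where "w = ind \<rho>" using S by auto
    then show "u w * w \<sigma> = (if w = v then u w else 0)" using \<sigma>
      by (auto simp: ind_def fun_eq_iff)
  qed simp
  also have "\<dots> = u v" using S(2) v by simp
  finally show "u v = 0" by simp
qed

definition faces :: "nat set set \<Rightarrow> nat \<Rightarrow> nat set set" where
  "faces Y j = {\<sigma>\<in>Y. card \<sigma> = j}"

lemma chains_eq: "chains Y k = {g. \<forall>\<tau>. g \<tau> \<noteq> 0 \<longrightarrow> \<tau> \<in> faces Y (k+1)}"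
  by (auto simp: chains_def faces_def)

lemma chains_subspace: "CV.subspace (chains Y k)"
  unfolding CV.subspace_def chains_def
  by (auto simp: cscale_def) (metis add.right_neutral)+

lemma bdry_linear: "Vector_Spaces.linear cscale cscale (bdry Y k)"
  unfolding Vector_Spaces.linear_iff
  by (auto simp: CV.vector_space_axioms bdry_def fun_eq_iff cscale_def sum.distrib
      sum_distrib_left algebra_simps)

lemma bdry_supp: "bdry Y k ` A \<subseteq> {g. \<forall>\<tau>. g \<tau> \<noteq> 0 \<longrightarrow> \<tau> \<in> faces Y k}"
  by (auto simp: bdry_def faces_def split: if_splits)

lemma betti_lower:
  assumes "finite Y"
  shows "real (betti k Y) \<ge> real (card (faces Y (k+1))) - real (card (faces Y k))
            - real (card (faces Y (k+2)))"
proof -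
  have fin: "finite (faces Y j)" for j using assms by (auto simp: faces_def)
  have sp: "chains Y j \<subseteq> CV.span (ind ` faces Y (j+1))" for j
    unfolding chains_eq by (rule supp_in_span[OF fin])
  have d1: "card (faces Y (k+1)) \<le> CV.dim (chains Y k)"
  proof -
    have sub: "ind ` faces Y (k+1) \<subseteq> chains Y k" by (auto simp: chains_eq ind_def split: if_splits)
    have "CV.span (ind ` faces Y (k+1)) = CV.span (chains Y k)"
      using CV.span_mono[OF sub] CV.span_mono[OF sp[of k]] by (auto simp: CV.span_span)
    then have "card (ind ` faces Y (k+1)) = CV.dim (chains Y k)"
      using CV.dim_eq_card[OF _ ind_independent] by metis
    then show ?thesis using card_image[OF inj_on_subset[OF inj_ind]] by simp
  qed
  have d2: "CV.dim (chains Y k) \<le> CV.dim {c\<in>chains Y k. bdry Y k c = 0} + card (ind ` faces Y k)"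
    by (rule CV.rank_nullity_le[OF chains_subspace sp _ bdry_linear])
       (use order_trans[OF bdry_supp[of Y k "chains Y k"] supp_in_span[OF fin, of k]] fin in auto)
  have d3: "CV.dim (bdry Y (k+1) ` chains Y (k+1)) \<le> card (faces Y (k+2))"
  proof -
    interpret L: Vector_Spaces.linear cscale cscale "bdry Y (k+1)" by (rule bdry_linear)
    have "bdry Y (k+1) ` chains Y (k+1) \<subseteq> bdry Y (k+1) ` CV.span (ind ` faces Y (k+2))"
      using sp[of "k+1"] by auto
    also have "\<dots> = CV.span (bdry Y (k+1) ` ind ` faces Y (k+2))"
      by (rule L.span_image[symmetric])
    finally have "CV.dim (bdry Y (k+1) ` chains Y (k+1)) \<le> card (bdry Y (k+1) ` ind ` faces Y (k+2))"
      using CV.dim_le_card fin by blast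
    also have "\<dots> \<le> card (faces Y (k+2))"
      using card_image_le fin by (metis (no_types) finite_imageI le_trans)
    finally show ?thesis .
  qed
  have "card (ind ` faces Y k) \<le> card (faces Y k)" using card_image_le fin by blast
  then show ?thesis using d1 d2 d3 unfolding betti_def by linarith
qed




locale aseq =
  fixes a :: "nat \<Rightarrow> real" and k :: nat
  assumes pos: "\<And>l. l \<le> k+1 \<Longrightarrow> a l > 0"
    and dec: "\<And>m. 1 \<le> m \<Longrightarrow> m \<le> k+1 \<Longrightarrow> a m \<le> a (m-1)"
    and conc: "\<And>m. 2 \<le> m \<Longrightarrow> m \<le> k+1 \<Longrightarrow> a m * a (m-2) \<le> a (m-1)^2"
begin

lemma pos': "l \<le> k+1 \<Longrightarrow> a l \<ge> 0" using pos[of l] by simp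

lemma dec': "l1 \<le> l2 \<Longrightarrow> l2 \<le> k+1 \<Longrightarrow> a l2 \<le> a l1"
proof (induction l2 rule: dec_induct)
  case (step m)
  then have "a (Suc m) \<le> a m" using dec[of "Suc m"] by simp
  then show ?case using step by simp
qed simp

lemma A1:
  assumes i: "1 \<le> i" "i \<le> k+1"
  shows "(\<Prod>l<k+1. a l) ^ i \<le> (\<Prod>l<i. a l) ^ (k+1)"
proof -
  define P where "P = (\<Prod>l<i. a l)"
  define R where "R = (\<Prod>l\<in>{i..<k+1}. a l)"
  have split: "(\<Prod>l<k+1. a l) = P * R"
    unfolding P_def R_def using i
    by (metis prod.atLeastLessThan_concat lessThan_atLeast0 zero_le)
  have P0: "P \<ge> 0" unfolding P_def using i by (intro prod_nonneg pos') auto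
  have R0: "R \<ge> 0" unfolding R_def by (intro prod_nonneg pos') auto
  have "R \<le> (\<Prod>l\<in>{i..<k+1}. a (i-1))"
    unfolding R_def using i by (intro prod_mono conjI pos' dec') auto
  then have R1: "R \<le> a (i-1) ^ (k+1-i)" by simp
  have "a (i-1) ^ i = (\<Prod>l<i. a (i-1))" by simp
  also have "\<dots> \<le> P" unfolding P_def using i
    by (intro prod_mono conjI pos' dec') auto
  finally have P1: "a (i-1) ^ i \<le> P" .
  have ai: "a (i-1) \<ge> 0" using pos'[of "i-1"] i by simp
  have "(P * R) ^ i = P^i * R^i" by (simp add: power_mult_distrib)
  also have "\<dots> \<le> P^i * (a (i-1) ^ (k+1-i))^i"
    using R1 R0 P0 by (intro mult_left_mono power_mono) auto
  also have "(a (i-1) ^ (k+1-i))^i = (a (i-1) ^ i)^(k+1-i)"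
    by (simp add: power_mult[symmetric] mult.commute)
  also have "P^i * \<dots> \<le> P^i * P^(k+1-i)"
    using P1 P0 ai by (intro mult_left_mono power_mono) auto
  also have "\<dots> = P^(k+1)" using i by (simp add: power_add[symmetric])
  finally show ?thesis using split P_def by simp
qed

definition d where "d l = a (l-1) / a l"

lemma d_nonneg: "l \<le> k+1 \<Longrightarrow> d l \<ge> 0"
  unfolding d_def using pos'[of l] pos'[of "l-1"] by simp

lemma d_mono: "l \<le> k+1 \<Longrightarrow> 1 \<le> l \<Longrightarrow> d l \<le> d (k+1)"
proof (induction l rule: inc_induct)
  case (step m)
  have m: "1 \<le> m" "m < k+1" using step by auto
  have c: "a (Suc m) * a (Suc m - 2) \<le> a (Suc m - 1)^2" using conc[of "Suc m"] m by simp
  have p1: "a (Suc m) > 0" "a m > 0" "a (m-1) > 0" using pos m by auto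
  have "d m = a (m-1) / a m" by (simp add: d_def)
  also have "\<dots> \<le> a m / a (Suc m)"
    using c p1 m by (simp add: divide_simps power2_eq_square numeral_2_eq_2)
       (metis Suc_diff_Suc diff_Suc_1 mult.commute Suc_le_lessD numeral_2_eq_2 One_nat_def Suc_le_eq)
  also have "\<dots> = d (Suc m)" by (simp add: d_def)
  finally show ?case using step by simp
qed simp

lemma A2: "l \<le> k \<Longrightarrow> a l \<le> a k * d (k+1) ^ (k - l)"
proof (induction l rule: inc_induct)
  case (step m)
  have dm: "d (Suc m) \<le> d (k+1)" using d_mono[of "Suc m"] step by simp
  have "a m = a (Suc m) * d (Suc m)" using pos[of "Suc m"] step by (simp add: d_def)
  also have "\<dots> \<le> a k * d (k+1) ^ (k - Suc m) * d (k+1)"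
    apply (rule mult_mono[OF step.IH dm])
    using pos' d_nonneg step by (auto intro!: mult_nonneg_nonneg zero_le_power)
  also have "\<dots> = a k * d (k+1) ^ (k - m)"
  proof -
    have "k - m = Suc (k - Suc m)" using step by simp
    then show ?thesis by (simp add: power_Suc2 mult.assoc)
  qed
  finally show ?case .
qed simp

end

lemma prod_tele:
  fixes Q :: "nat \<Rightarrow> real"
  assumes "\<And>l. l \<le> i \<Longrightarrow> Q l \<noteq> 0"
  shows "(\<Prod>l<i. x * (Q (l+1) / Q l)) = x^i * Q i / Q 0"
  using assms
proof (induction i)
  case (Suc i)
  have "(\<Prod>l<Suc i. x * (Q (l+1) / Q l)) = x^i * Q i / Q 0 * (x * (Q (i+1) / Q i))"
    using Suc by simp
  also have "\<dots> = x^(Suc i) * Q (Suc i) / Q 0" using Suc.prems[of i] by (simp add: field_simps)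
  finally show ?case .
qed simp

lemma aux_conc:
  fixes x y z w :: real
  assumes "y > 0" "w > 0" "z > 0" "x * z^3 \<le> y^3 * w"
  shows "(x/y)*(z/w) \<le> (y/z)^2"
proof -
  have "(x/y)*(z/w) = (x*z^3) / (y*w*z^2)" using assms by (simp add: field_simps power2_eq_square power3_eq_cube)
  also have "\<dots> \<le> (y^3*w) / (y*w*z^2)" using assms by (intro divide_right_mono) auto
  also have "\<dots> = (y/z)^2" using assms by (simp add: field_simps power2_eq_square power3_eq_cube)
  finally show ?thesis .
qed

lemma asym_limits:
  fixes Q :: "nat \<Rightarrow> nat \<Rightarrow> real" and c :: real and k :: nat
  assumes c: "c > 0"
   and ev: "eventually (\<lambda>n. (\<forall>j \<le> k+2. Q n j > 0) \<and> Q n 0 \<le> 1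
      \<and> (\<forall>m. 1 \<le> m \<longrightarrow> m \<le> k+1 \<longrightarrow> Q n (m+1) * Q n (m-1) \<le> Q n m ^ 2)
      \<and> (\<forall>m. 2 \<le> m \<longrightarrow> m \<le> k+1 \<longrightarrow> Q n (m+1) * Q n (m-1)^3 \<le> Q n m ^ 3 * Q n (m-2))) sequentially"
   and lim1: "filterlim (\<lambda>n. real n ^ (k+1) * Q n (k+1)) at_top sequentially"
   and lim2: "(\<lambda>n. real n * (Q n (k+2) / Q n (k+1))) \<longlonglongrightarrow> c"
  shows "filterlim (\<lambda>n. real n * (Q n (k+1) / Q n k)) at_top sequentially"
   and "\<And>i. 1 \<le> i \<Longrightarrow> i \<le> k+2 \<Longrightarrow> filterlim (\<lambda>n. real n ^ i * Q n i / Q n 0) at_top sequentially"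
proof -
  define a where "a n l = real n * (Q n (l+1) / Q n l)" for n l
  define G where "G n \<longleftrightarrow> (\<forall>j \<le> k+2. Q n j > 0) \<and> Q n 0 \<le> 1
      \<and> (\<forall>m. 1 \<le> m \<longrightarrow> m \<le> k+1 \<longrightarrow> Q n (m+1) * Q n (m-1) \<le> Q n m ^ 2)
      \<and> (\<forall>m. 2 \<le> m \<longrightarrow> m \<le> k+1 \<longrightarrow> Q n (m+1) * Q n (m-1)^3 \<le> Q n m ^ 3 * Q n (m-2))" for n
  have evG: "eventually (\<lambda>n. G n \<and> n \<ge> 1) sequentially"
    using ev eventually_ge_at_top[of 1] unfolding G_def by eventually_elim auto
  have aseqG: "aseq (a n) k" if "G n" "n \<ge> 1" for n
  proof
    have Qp: "\<And>j. j \<le> k+2 \<Longrightarrow> Q n j > 0" using that unfolding G_def by auto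
    have np: "real n > 0" using that by simp
    show "0 < a n l" if "l \<le> k+1" for l unfolding a_def using Qp[of l] Qp[of "l+1"] np that by simp
    show "a n m \<le> a n (m-1)" if m: "1 \<le> m" "m \<le> k+1" for m
    proof -
      have i: "Q n (m+1) * Q n (m-1) \<le> Q n m ^ 2" using \<open>G n\<close> m unfolding G_def by auto
      have p: "Q n (m+1) > 0" "Q n m > 0" "Q n (m-1) > 0" using Qp m by auto
      have "Q n (m+1) / Q n m \<le> Q n m / Q n (m-1)"
        using i p by (simp add: divide_simps power2_eq_square mult.commute)
      then have "real n * (Q n (m+1) / Q n m) \<le> real n * (Q n m / Q n (m-1))"
        by (rule mult_left_mono) auto
      moreover have "m - 1 + 1 = m" using m by simp
      ultimately show ?thesis unfolding a_def by simp
    qed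
    show "a n m * a n (m-2) \<le> (a n (m-1))^2" if m: "2 \<le> m" "m \<le> k+1" for m
    proof -
      have i: "Q n (m+1) * Q n (m-1)^3 \<le> Q n m ^ 3 * Q n (m-2)" using \<open>G n\<close> m unfolding G_def by auto
      have p: "Q n (m+1) > 0" "Q n m > 0" "Q n (m-1) > 0" "Q n (m-2) > 0" using Qp m by auto
      have e1: "m - 1 + 1 = m" "m - 2 + 1 = m - 1" using m by auto
      have "(Q n (m+1) / Q n m) * (Q n (m-1) / Q n (m-2)) \<le> (Q n m / Q n (m-1))^2"
        by (rule aux_conc) (use p i in auto)
      then have "real n ^2 * ((Q n (m+1) / Q n m) * (Q n (m-1) / Q n (m-2))) \<le> real n^2 * (Q n m / Q n (m-1))^2"
        by (rule mult_left_mono) auto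
      then show ?thesis unfolding a_def e1 by (simp add: power2_eq_square mult_ac)
    qed
  qed
  have prodP: "(\<Prod>l<i. a n l) = real n ^ i * Q n i / Q n 0" if "G n" "i \<le> k+2" for n i
  proof -
    have Qp: "\<forall>j \<le> k+2. Q n j > 0" using that(1) unfolding G_def by blast
    show ?thesis unfolding a_def
      by (rule prod_tele) (use Qp that(2) in \<open>metis le_trans less_irrefl\<close>)
  qed
  have PK: "filterlim (\<lambda>n. real n ^ (k+1) * Q n (k+1) / Q n 0) at_top sequentially"
  proof (rule filterlim_at_top_mono[OF lim1])
    show "\<forall>\<^sub>F n in sequentially. real n ^ (k+1) * Q n (k+1) \<le> real n ^ (k+1) * Q n (k+1) / Q n 0"
      using evG
    proof eventually_elim
      case (elim n)
      then have "Q n 0 > 0" "Q n 0 \<le> 1" "Q n (k+1) > 0" unfolding G_def by auto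
      moreover have "real n ^ (k+1) * Q n (k+1) \<ge> 0" using \<open>Q n (k+1) > 0\<close> by simp
      ultimately show ?case by (subst le_divide_eq) (auto intro: mult_left_le)
    qed
  qed
  have lowi: "filterlim (\<lambda>n. real n ^ i * Q n i / Q n 0) at_top sequentially"
    if i: "1 \<le> i" "i \<le> k+1" for i
    unfolding filterlim_at_top
  proof
    fix Z :: real
    define Z' where "Z' = max 1 (max Z 0 ^ (k+1))"
    have "eventually (\<lambda>n. Z' \<le> real n ^ (k+1) * Q n (k+1) / Q n 0) sequentially"
      using PK unfolding filterlim_at_top by blast
    with evG show "eventually (\<lambda>n. Z \<le> real n ^ i * Q n i / Q n 0) sequentially"
    proof eventually_elim
      case (elim n)
      interpret aseq "a n" k using aseqG elim by blast
      have A: "(\<Prod>l<k+1. a n l) ^ i \<le> (\<Prod>l<i. a n l) ^ (k+1)" by (rule A1[OF i])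
      have P1: "(\<Prod>l<k+1. a n l) \<ge> Z'" using elim prodP[of n "k+1"] by simp
      have Z1: "Z' \<ge> 1" unfolding Z'_def by simp
      have "Z' \<le> Z' ^ i" using Z1 i by (simp add: self_le_power)
      also have "\<dots> \<le> (\<Prod>l<k+1. a n l) ^ i" by (rule power_mono[OF P1]) (use Z1 in linarith)
      finally have "max Z 0 ^ (k+1) \<le> (\<Prod>l<i. a n l) ^ (k+1)" using A unfolding Z'_def by linarith
      moreover have "(\<Prod>l<i. a n l) \<ge> 0" using i by (intro prod_nonneg pos') auto
      ultimately have "max Z 0 \<le> (\<Prod>l<i. a n l)" by (rule power_le_imp_le_base[where n=k, unfolded Suc_eq_plus1])
      then show ?case using prodP[of n i] elim i by simp
    qed
  qed
  show "filterlim (\<lambda>n. real n ^ i * Q n i / Q n 0) at_top sequentially" if i: "1 \<le> i" "i \<le> k+2" for i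
  proof (cases "i \<le> k+1")
    case True then show ?thesis using lowi i by blast
  next
    case False
    then have ik: "i = k+2" using i by simp
    have L: "filterlim (\<lambda>n. real n * (Q n (k+2) / Q n (k+1)) * (real n ^ (k+1) * Q n (k+1) / Q n 0)) at_top sequentially"
      by (rule filterlim_tendsto_pos_mult_at_top[OF lim2 c PK])
    have E: "eventually (\<lambda>n. real n * (Q n (k+2) / Q n (k+1)) * (real n ^ (k+1) * Q n (k+1) / Q n 0)
        = real n ^ i * Q n i / Q n 0) sequentially"
      using evG
    proof eventually_elim
      case (elim n) then have "Q n (k+1) > 0" unfolding G_def by auto
      then show ?case using ik by (simp add: field_simps)
    qed
    show ?thesis using L unfolding filterlim_cong[OF refl refl E] .
  qed
  show "filterlim (\<lambda>n. real n * (Q n (k+1) / Q n k)) at_top sequentially"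
    unfolding filterlim_at_top
  proof
    fix Z :: real
    define M where "M = max Z 1"
    define B where "B = (\<Prod>l<k+1. M * (2*M/c) ^ (k-l))"
    have "eventually (\<lambda>n. B + 1 \<le> real n ^ (k+1) * Q n (k+1) / Q n 0) sequentially"
      using PK unfolding filterlim_at_top by blast
    moreover have "eventually (\<lambda>n. c/2 < real n * (Q n (k+2) / Q n (k+1))) sequentially"
      using lim2 c by (intro order_tendstoD(1)) auto
    ultimately show "eventually (\<lambda>n. Z \<le> real n * (Q n (k+1) / Q n k)) sequentially" using evG
    proof eventually_elim
      case (elim n)
      interpret aseq "a n" k using aseqG elim by blast
      show ?case
      proof (rule ccontr)
        assume "\<not> ?case"
        then have ak: "a n k < M" unfolding a_def M_def by auto
        have ak1: "a n (k+1) > c/2" using elim unfolding a_def by (simp add: add.commute)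
        have M1: "M \<ge> 1" unfolding M_def by simp
        have dle: "d (k+1) \<le> 2*M/c"
        proof -
          have "d (k+1) = a n k / a n (k+1)" unfolding d_def by simp
          also have "\<dots> \<le> M / (c/2)"
            using ak ak1 pos'[of k] c M1 by (intro frac_le) auto
          finally show ?thesis by (simp add: mult.commute)
        qed
        have "(\<Prod>l<k+1. a n l) \<le> (\<Prod>l<k+1. a n k * d (k+1) ^ (k-l))"
          by (intro prod_mono conjI pos' A2) auto
        also have "\<dots> \<le> B" unfolding B_def
        proof (rule prod_mono)
          fix l assume "l \<in> {..<k+1}"
          have d0: "0 \<le> d (k+1) ^ (k-l)" using d_nonneg[of "k+1"] by simp
          have ak0: "0 \<le> a n k" using pos'[of k] by simp
          have pw: "d (k+1) ^ (k-l) \<le> (2*M/c) ^ (k-l)"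
            by (rule power_mono[OF dle d_nonneg]) simp
          have "a n k * d (k+1) ^ (k-l) \<le> M * (2*M/c) ^ (k-l)"
            by (rule mult_mono[OF less_imp_le[OF ak] pw]) (use M1 d0 in auto)
          then show "0 \<le> a n k * d (k+1) ^ (k-l) \<and> a n k * d (k+1) ^ (k-l) \<le> M * (2*M/c) ^ (k-l)"
            using d0 ak0 by simp
        qed
        finally have "(\<Prod>l<k+1. a n l) \<le> B" .
        then show False using elim prodP[of n "k+1"] by simp
      qed
    qed
  qed
qed




definition U :: "nat \<Rightarrow> nat set set set" where "U n = {Y. is_subcomplex n Y}"

lemma finite_U: "finite (U n)"
  by (rule finite_subset[of _ "Pow (Pow {0..<n})"]) (auto simp: U_def is_subcomplex_def)

lemma U_fin: "Y \<in> U n \<Longrightarrow> finite Y"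
  unfolding U_def is_subcomplex_def by (auto intro: finite_subset[where B="Pow {0..<n}"])

lemma U_down: "Y \<in> U n \<Longrightarrow> \<sigma> \<in> Y \<Longrightarrow> \<tau> \<subseteq> \<sigma> \<Longrightarrow> \<tau> \<in> Y"
  unfolding U_def is_subcomplex_def by blast

lemma U_sub: "Y \<in> U n \<Longrightarrow> \<sigma> \<in> Y \<Longrightarrow> \<sigma> \<subseteq> {0..<n}"
  unfolding U_def is_subcomplex_def by blast

lemma U_empty: "Y \<in> U n \<Longrightarrow> {} \<notin> Y \<Longrightarrow> Y = {}"
  using U_down by blast

lemma prob_sum:
  assumes sub: "\<forall>Y\<in>set_pmf p. is_subcomplex n Y"
  shows "measure_pmf.prob p A = sum (pmf p) (U n \<inter> A)"
proof -
  have s: "set_pmf p \<subseteq> U n" using sub by (auto simp: U_def)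
  have "measure_pmf.prob p A = measure_pmf.prob p (A \<inter> set_pmf p)"
    by (simp add: measure_Int_set_pmf)
  also have "\<dots> = sum (pmf p) (A \<inter> set_pmf p)"
    by (rule measure_measure_pmf_finite) (use s finite_U in \<open>blast intro: finite_subset\<close>)
  also have "\<dots> = sum (pmf p) (U n \<inter> A)"
    by (rule sum.mono_neutral_left) (use s finite_U in \<open>auto simp: set_pmf_eq\<close>)
  finally show ?thesis .
qed

lemma prob_cong:
  assumes sub: "\<forall>Y\<in>set_pmf p. is_subcomplex n Y"
    and "\<And>Y. Y \<in> U n \<Longrightarrow> Y \<in> A \<longleftrightarrow> Y \<in> B"
  shows "measure_pmf.prob p A = measure_pmf.prob p B"
proof -
  have "U n \<inter> A = U n \<inter> B" using assms(2) by blast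
  then show ?thesis using prob_sum[OF sub] by simp
qed

lemma prob_mono:
  assumes sub: "\<forall>Y\<in>set_pmf p. is_subcomplex n Y"
    and "\<And>Y. Y \<in> U n \<Longrightarrow> Y \<in> A \<Longrightarrow> Y \<in> B"
  shows "measure_pmf.prob p A \<le> measure_pmf.prob p B"
proof -
  have "sum (pmf p) (U n \<inter> A) \<le> sum (pmf p) (U n \<inter> B)"
    by (rule sum_mono2) (use assms(2) finite_U in auto)
  then show ?thesis using prob_sum[OF sub] by simp
qed

definition Qf :: "nat set set pmf \<Rightarrow> nat \<Rightarrow> real" where
  "Qf p j = measure_pmf.prob p {Z. {0..<j} \<in> Z}"

lemma hom_face:
  assumes hom: "homogeneous n p" and \<sigma>: "\<sigma> \<subseteq> {0..<n}" "card \<sigma> = j"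
  shows "measure_pmf.prob p {Z. \<sigma> \<in> Z} = Qf p j"
proof -
  have fs: "finite \<sigma>" using \<sigma>(1) finite_subset by blast
  have jn: "j \<le> n" using card_mono[OF _ \<sigma>(1)] \<sigma>(2) by simp
  obtain g where g: "bij_betw g {0..<j} \<sigma>"
    using finite_same_card_bij[of "{0..<j}" \<sigma>] fs \<sigma>(2) by auto
  have "card ({0..<n} - {0..<j}) = card ({0..<n} - \<sigma>)"
    using \<sigma> jn by (simp add: card_Diff_subset fs)
  then obtain h where h: "bij_betw h ({0..<n} - {0..<j}) ({0..<n} - \<sigma>)"
    using finite_same_card_bij[of "{0..<n} - {0..<j}" "{0..<n} - \<sigma>"] by auto
  define \<pi> where "\<pi> x = (if x < j then g x else if x < n then h x else x)" for x
  have b1: "bij_betw \<pi> {0..<j} \<sigma>"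
    using g by (rule bij_betw_cong[THEN iffD1, rotated]) (auto simp: \<pi>_def)
  have b2: "bij_betw \<pi> ({0..<n} - {0..<j}) ({0..<n} - \<sigma>)"
    using h by (rule bij_betw_cong[THEN iffD1, rotated]) (auto simp: \<pi>_def)
  have "bij_betw \<pi> ({0..<j} \<union> ({0..<n} - {0..<j})) (\<sigma> \<union> ({0..<n} - \<sigma>))"
    by (rule bij_betw_combine[OF b1 b2]) auto
  moreover have "{0..<j} \<union> ({0..<n} - {0..<j}) = {0..<n}" "\<sigma> \<union> ({0..<n} - \<sigma>) = {0..<n}"
    using jn \<sigma>(1) by auto
  ultimately have "bij_betw \<pi> {0..<n} {0..<n}" by simp
  then have perm: "\<pi> permutes {0..<n}"
    unfolding permutes_altdef using jn by (auto simp: \<pi>_def)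
  have inj: "inj \<pi>" by (rule permutes_inj[OF perm])
  have im: "\<pi> ` {0..<j} = \<sigma>" using b1 by (simp add: bij_betw_def)
  let ?F = "\<lambda>Y. (\<lambda>s. \<pi> ` s) ` Y"
  have "measure_pmf.prob p {Z. \<sigma> \<in> Z} = measure_pmf.prob (map_pmf ?F p) {Z. \<sigma> \<in> Z}"
    using hom perm unfolding homogeneous_def by simp
  also have "\<dots> = measure_pmf.prob p (?F -` {Z. \<sigma> \<in> Z})" by simp
  also have "?F -` {Z. \<sigma> \<in> Z} = {Z. {0..<j} \<in> Z}"
  proof -
    have "\<sigma> \<in> ?F Y \<longleftrightarrow> {0..<j} \<in> Y" for Y
    proof
      assume "\<sigma> \<in> ?F Y"
      then obtain \<rho> where "\<rho> \<in> Y" "\<pi> ` \<rho> = \<pi> ` {0..<j}" using im by auto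
      then show "{0..<j} \<in> Y" using inj_image_eq_iff[OF inj] by auto
    next
      assume "{0..<j} \<in> Y" then show "\<sigma> \<in> ?F Y" using im by auto
    qed
    then show ?thesis by auto
  qed
  finally show ?thesis unfolding Qf_def .
qed

lemma prob_Pow:
  assumes sub: "\<forall>Y\<in>set_pmf p. is_subcomplex n Y"
  shows "measure_pmf.prob p {Z. Pow \<sigma> \<subseteq> Z} = measure_pmf.prob p {Z. \<sigma> \<in> Z}"
  by (rule prob_cong[OF sub]) (auto dest: U_down)

lemma subcomplex_Pow: "\<sigma> \<subseteq> {0..<n} \<Longrightarrow> is_subcomplex n (Pow \<sigma>)"
  unfolding is_subcomplex_def by auto

lemma pair_prob:
  assumes sub: "\<forall>Y\<in>set_pmf p. is_subcomplex n Y" and hom: "homogeneous n p"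
    and si: "spatially_independent n p"
    and \<sigma>: "\<sigma> \<subseteq> {0..<n}" and \<tau>: "\<tau> \<subseteq> {0..<n}" and pos: "Qf p (card (\<sigma> \<inter> \<tau>)) > 0"
  shows "measure_pmf.prob p {Z. \<sigma> \<in> Z \<and> \<tau> \<in> Z}
       = Qf p (card \<sigma>) * Qf p (card \<tau>) / Qf p (card (\<sigma> \<inter> \<tau>))"
proof -
  have e1: "measure_pmf.prob p {Z. Pow \<sigma> \<union> Pow \<tau> \<subseteq> Z} = measure_pmf.prob p {Z. \<sigma> \<in> Z \<and> \<tau> \<in> Z}"
    by (rule prob_cong[OF sub]) (auto dest: U_down)
  have e2: "Pow \<sigma> \<inter> Pow \<tau> = Pow (\<sigma> \<inter> \<tau>)" by auto
  have hf: "measure_pmf.prob p {Z. \<rho> \<in> Z} = Qf p (card \<rho>)" if "\<rho> \<subseteq> {0..<n}" for \<rho>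
    by (rule hom_face[OF hom that refl])
  have "measure_pmf.prob p {Z. \<sigma> \<in> Z \<and> \<tau> \<in> Z} * Qf p (card (\<sigma> \<inter> \<tau>)) = Qf p (card \<sigma>) * Qf p (card \<tau>)"
  proof -
    have A: "measure_pmf.prob p {Z. Pow \<sigma> \<union> Pow \<tau> \<subseteq> Z} * measure_pmf.prob p {Z. Pow (\<sigma> \<inter> \<tau>) \<subseteq> Z}
      = measure_pmf.prob p {Z. Pow \<sigma> \<subseteq> Z} * measure_pmf.prob p {Z. Pow \<tau> \<subseteq> Z}"
      using si[unfolded spatially_independent_def, rule_format, OF subcomplex_Pow[OF \<sigma>] subcomplex_Pow[OF \<tau>]]
      unfolding e2 .
    have "\<sigma> \<inter> \<tau> \<subseteq> {0..<n}" using \<sigma> by auto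
    then show ?thesis using A unfolding e1 prob_Pow[OF sub] hf[OF \<sigma>] hf[OF \<tau>] by (simp add: hf)
  qed
  then show ?thesis using pos by (simp add: field_simps)
qed


lemma Pow_sub_U: "Y \<in> U n \<Longrightarrow> Pow \<sigma> \<subseteq> Y \<longleftrightarrow> \<sigma> \<in> Y"
  using U_down by blast

lemma triple_prob:
  assumes sub: "\<forall>Y\<in>set_pmf p. is_subcomplex n Y"
    and si: "spatially_independent n p"
    and \<sigma>: "\<sigma> \<subseteq> {0..<n}" and \<tau>: "\<tau> \<subseteq> {0..<n}" and \<rho>: "\<rho> \<subseteq> {0..<n}"
  shows "measure_pmf.prob p {Z. \<sigma> \<in> Z \<and> \<tau> \<in> Z \<and> \<rho> \<in> Z} * measure_pmf.prob p {Z. \<sigma> \<inter> \<rho> \<in> Z \<and> \<tau> \<inter> \<rho> \<in> Z}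
       = measure_pmf.prob p {Z. \<sigma> \<in> Z \<and> \<tau> \<in> Z} * measure_pmf.prob p {Z. \<rho> \<in> Z}"
proof -
  have s1: "is_subcomplex n (Pow \<sigma> \<union> Pow \<tau>)" using \<sigma> \<tau> unfolding is_subcomplex_def by auto
  have A: "measure_pmf.prob p {Z. (Pow \<sigma> \<union> Pow \<tau>) \<union> Pow \<rho> \<subseteq> Z} * measure_pmf.prob p {Z. (Pow \<sigma> \<union> Pow \<tau>) \<inter> Pow \<rho> \<subseteq> Z}
      = measure_pmf.prob p {Z. Pow \<sigma> \<union> Pow \<tau> \<subseteq> Z} * measure_pmf.prob p {Z. Pow \<rho> \<subseteq> Z}"
    using si[unfolded spatially_independent_def, rule_format, OF s1 subcomplex_Pow[OF \<rho>]] .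
  have e1: "measure_pmf.prob p {Z. (Pow \<sigma> \<union> Pow \<tau>) \<union> Pow \<rho> \<subseteq> Z} = measure_pmf.prob p {Z. \<sigma> \<in> Z \<and> \<tau> \<in> Z \<and> \<rho> \<in> Z}"
    by (rule prob_cong[OF sub]) (simp only: mem_Collect_eq Un_subset_iff Pow_sub_U conj_assoc)
  have i: "(Pow \<sigma> \<union> Pow \<tau>) \<inter> Pow \<rho> = Pow (\<sigma> \<inter> \<rho>) \<union> Pow (\<tau> \<inter> \<rho>)" by blast
  have e2: "measure_pmf.prob p {Z. (Pow \<sigma> \<union> Pow \<tau>) \<inter> Pow \<rho> \<subseteq> Z} = measure_pmf.prob p {Z. \<sigma> \<inter> \<rho> \<in> Z \<and> \<tau> \<inter> \<rho> \<in> Z}"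
    unfolding i by (rule prob_cong[OF sub]) (simp only: mem_Collect_eq Un_subset_iff Pow_sub_U conj_assoc)
  have e3: "measure_pmf.prob p {Z. Pow \<sigma> \<union> Pow \<tau> \<subseteq> Z} = measure_pmf.prob p {Z. \<sigma> \<in> Z \<and> \<tau> \<in> Z}"
    by (rule prob_cong[OF sub]) (simp only: mem_Collect_eq Un_subset_iff Pow_sub_U conj_assoc)
  show ?thesis using A unfolding e1 e2 e3 prob_Pow[OF sub] .
qed

lemma card_minus: "A \<subseteq> {0..<m} \<Longrightarrow> card ({0..<m} - A) = m - card A"
  by (simp add: card_Diff_subset finite_subset)

lemma card_minus1: "a < m \<Longrightarrow> card ({0..<m} - {a}) = m - 1"
  using card_minus[of "{a}" m] by simp
lemma card_minus2: "a < m \<Longrightarrow> b < m \<Longrightarrow> a \<noteq> b \<Longrightarrow> card ({0..<m} - {a,b}) = m - 2"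
  using card_minus[of "{a,b}" m] by simp
lemma card_minus3: "a < m \<Longrightarrow> b < m \<Longrightarrow> c < m \<Longrightarrow> a \<noteq> b \<Longrightarrow> a \<noteq> c \<Longrightarrow> b \<noteq> c
   \<Longrightarrow> card ({0..<m} - {a,b,c}) = m - 3"
  using card_minus[of "{a,b,c}" m] by simp

lemma Q_pair:
  assumes sub: "\<forall>Y\<in>set_pmf p. is_subcomplex n Y" and hom: "homogeneous n p"
    and si: "spatially_independent n p"
    and m: "1 \<le> m" "m + 1 \<le> n" and pos: "Qf p (m-1) > 0"
  shows "Qf p (m+1) * Qf p (m-1) \<le> Qf p m ^ 2"
proof -
  define \<sigma> where "\<sigma> = {0..<m+1} - {0}"
  define \<tau> where "\<tau> = {0..<m+1} - {1}"
  have st: "\<sigma> \<inter> \<tau> = {0..<m+1} - {0,1}" unfolding \<sigma>_def \<tau>_def by auto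
  have c: "card \<sigma> = m" "card \<tau> = m" "card (\<sigma> \<inter> \<tau>) = m - 1"
    unfolding st unfolding \<sigma>_def \<tau>_def using m card_minus1[of 0 "m+1"] card_minus1[of 1 "m+1"]
      card_minus2[of 0 "m+1" 1] by auto
  have ss: "\<sigma> \<subseteq> {0..<n}" "\<tau> \<subseteq> {0..<n}" using m unfolding \<sigma>_def \<tau>_def by auto
  have "Qf p (m+1) \<le> measure_pmf.prob p {Z. \<sigma> \<in> Z \<and> \<tau> \<in> Z}"
    unfolding Qf_def by (rule prob_mono[OF sub]) (simp only: mem_Collect_eq; intro conjI; rule U_down[where \<sigma>="{0..<m+1}"]; auto simp: \<sigma>_def \<tau>_def)
  also have "\<dots> = Qf p m * Qf p m / Qf p (m-1)"
    using pair_prob[OF sub hom si ss] c pos by simp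
  finally have "Qf p (m+1) \<le> Qf p m * Qf p m / Qf p (m-1)" .
  then show ?thesis using pos by (simp add: pos_le_divide_eq power2_eq_square)
qed

lemma aux_tri:
  fixes x a b q :: real
  assumes "a > 0" "b > 0" "x * (a * a / b) = q * q / a * q"
  shows "x = q ^ 3 * b / a ^ 3"
proof -
  have "x = (q * q / a * q) / (a * a / b)" using assms(3)[symmetric] assms(1,2) by simp
  also have "\<dots> = q ^ 3 * b / a ^ 3" using assms by (simp add: divide_simps power3_eq_cube)
  finally show ?thesis .
qed

lemma Q_triple:
  assumes sub: "\<forall>Y\<in>set_pmf p. is_subcomplex n Y" and hom: "homogeneous n p"
    and si: "spatially_independent n p"
    and m: "2 \<le> m" "m + 1 \<le> n" and pos: "Qf p (m-1) > 0" "Qf p (m-2) > 0"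
  shows "Qf p (m+1) * Qf p (m-1) ^ 3 \<le> Qf p m ^ 3 * Qf p (m-2)"
proof -
  define \<sigma> where "\<sigma> = {0..<m+1} - {0}"
  define \<tau> where "\<tau> = {0..<m+1} - {1}"
  define \<rho> where "\<rho> = {0..<m+1} - {2}"
  have st: "\<sigma> \<inter> \<tau> = {0..<m+1} - {0,1}" unfolding \<sigma>_def \<tau>_def by auto
  have sr: "\<sigma> \<inter> \<rho> = {0..<m+1} - {0,2}" unfolding \<sigma>_def \<rho>_def by auto
  have tr: "\<tau> \<inter> \<rho> = {0..<m+1} - {1,2}" unfolding \<tau>_def \<rho>_def by auto
  have str: "(\<sigma> \<inter> \<rho>) \<inter> (\<tau> \<inter> \<rho>) = {0..<m+1} - {0,1,2}" unfolding \<sigma>_def \<tau>_def \<rho>_def by auto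
  have c: "card \<sigma> = m" "card \<tau> = m" "card \<rho> = m" "card (\<sigma> \<inter> \<tau>) = m - 1"
     "card (\<sigma> \<inter> \<rho>) = m - 1" "card (\<tau> \<inter> \<rho>) = m - 1"
    unfolding str st sr tr unfolding \<sigma>_def \<tau>_def \<rho>_def using m card_minus1[of 0 "m+1"] card_minus1[of 1 "m+1"]
      card_minus1[of 2 "m+1"] card_minus2[of 0 "m+1" 1] card_minus2[of 0 "m+1" 2] card_minus2[of 1 "m+1" 2]
      by auto
  have c7: "card ((\<sigma> \<inter> \<rho>) \<inter> (\<tau> \<inter> \<rho>)) = m - 2"
    unfolding str using card_minus3[of 0 "m+1" 1 2] m by simp
  have ss: "\<sigma> \<subseteq> {0..<n}" "\<tau> \<subseteq> {0..<n}" "\<rho> \<subseteq> {0..<n}" using m unfolding \<sigma>_def \<tau>_def \<rho>_def by auto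
  have ss2: "\<sigma> \<inter> \<rho> \<subseteq> {0..<n}" "\<tau> \<inter> \<rho> \<subseteq> {0..<n}" using ss by auto
  have P2: "measure_pmf.prob p {Z. \<sigma> \<in> Z \<and> \<tau> \<in> Z} = Qf p m * Qf p m / Qf p (m-1)"
    using pair_prob[OF sub hom si ss(1,2)] c pos by simp
  have P2': "measure_pmf.prob p {Z. \<sigma> \<inter> \<rho> \<in> Z \<and> \<tau> \<inter> \<rho> \<in> Z} = Qf p (m-1) * Qf p (m-1) / Qf p (m-2)"
    using pair_prob[OF sub hom si ss2] c c7 pos by simp
  have P1: "measure_pmf.prob p {Z. \<rho> \<in> Z} = Qf p m" using hom_face[OF hom ss(3) c(3)] .
  have T: "measure_pmf.prob p {Z. \<sigma> \<in> Z \<and> \<tau> \<in> Z \<and> \<rho> \<in> Z} * (Qf p (m-1) * Qf p (m-1) / Qf p (m-2))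
      = Qf p m * Qf p m / Qf p (m-1) * Qf p m"
    using triple_prob[OF sub si ss] unfolding P2 P2' P1 .
  have "Qf p (m+1) \<le> measure_pmf.prob p {Z. \<sigma> \<in> Z \<and> \<tau> \<in> Z \<and> \<rho> \<in> Z}"
    unfolding Qf_def by (rule prob_mono[OF sub]) (simp only: mem_Collect_eq; intro conjI; rule U_down[where \<sigma>="{0..<m+1}"]; auto simp: \<sigma>_def \<tau>_def \<rho>_def)
  also have "\<dots> = Qf p m ^ 3 * Qf p (m-2) / Qf p (m-1) ^ 3"
    using aux_tri[OF pos T] .
  finally show ?thesis using pos by (simp add: pos_le_divide_eq)
qed


definition Sj :: "nat \<Rightarrow> nat \<Rightarrow> nat set set" where
  "Sj n j = {\<sigma>. \<sigma> \<subseteq> {0..<n} \<and> card \<sigma> = j}"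

lemma finite_Sj: "finite (Sj n j)"
  by (rule finite_subset[of _ "Pow {0..<n}"]) (auto simp: Sj_def)

lemma card_Sj: "card (Sj n j) = n choose j"
  unfolding Sj_def using n_subsets[of "{0..<n}" j] by simp

definition Fc :: "nat \<Rightarrow> nat set set \<Rightarrow> real" where
  "Fc j Y = real (card (faces Y j))"

lemma Fc_sum: "Y \<in> U n \<Longrightarrow> Fc j Y = (\<Sum>\<sigma>\<in>Sj n j. if \<sigma> \<in> Y then 1 else 0)"
proof -
  assume Y: "Y \<in> U n"
  have "faces Y j = Sj n j \<inter> Y" using U_sub[OF Y] by (auto simp: faces_def Sj_def)
  then have "card (faces Y j) = card (Sj n j \<inter> Y)" by simp
  also have "real \<dots> = (\<Sum>\<sigma>\<in>Sj n j \<inter> Y. 1)" by simp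
  also have "\<dots> = (\<Sum>\<sigma>\<in>Sj n j. if \<sigma> \<in> Y then 1 else 0)"
    by (rule sum.inter_restrict[OF finite_Sj])
  finally show ?thesis unfolding Fc_def .
qed

definition Expt :: "nat set set pmf \<Rightarrow> nat \<Rightarrow> (nat set set \<Rightarrow> real) \<Rightarrow> real" where
  "Expt p n g = (\<Sum>Y\<in>U n. pmf p Y * g Y)"

lemma Ex_ind:
  assumes sub: "\<forall>Y\<in>set_pmf p. is_subcomplex n Y"
  shows "Expt p n (\<lambda>Y. if Y \<in> A then 1 else 0) = measure_pmf.prob p A"
  unfolding Expt_def prob_sum[OF sub] sum.inter_restrict[OF finite_U]
  by (rule sum.cong) auto

lemma Ex_ind':
  assumes sub: "\<forall>Y\<in>set_pmf p. is_subcomplex n Y"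
  shows "Expt p n (\<lambda>Y. if P Y then 1 else 0) = measure_pmf.prob p {Y. P Y}"
  using Ex_ind[OF sub, of "{Y. P Y}"] by simp

lemma mult_ind: "(if a then 1 else 0) * (if b then 1 else (0::real)) = (if a \<and> b then 1 else 0)"
  by simp

lemma Ex_mono: "(\<And>Y. Y \<in> U n \<Longrightarrow> f Y \<le> g Y) \<Longrightarrow> Expt p n f \<le> Expt p n g"
  unfolding Expt_def by (intro sum_mono mult_left_mono) auto

lemma Ex_cong: "(\<And>Y. Y \<in> U n \<Longrightarrow> f Y = g Y) \<Longrightarrow> Expt p n f = Expt p n g"
  unfolding Expt_def by (intro sum.cong) auto

lemma Ex_add: "Expt p n (\<lambda>Y. f Y + g Y) = Expt p n f + Expt p n g"
  unfolding Expt_def by (simp add: distrib_left sum.distrib)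

lemma Ex_cmult: "Expt p n (\<lambda>Y. a * f Y) = a * Expt p n f"
  unfolding Expt_def by (simp add: sum_distrib_left mult_ac)

lemma Ex_sum: "finite A \<Longrightarrow> Expt p n (\<lambda>Y. \<Sum>x\<in>A. f x Y) = (\<Sum>x\<in>A. Expt p n (f x))"
  unfolding Expt_def by (simp add: sum_distrib_left sum.swap[of _ "U n"])

lemma Ex_F:
  assumes sub: "\<forall>Y\<in>set_pmf p. is_subcomplex n Y" and hom: "homogeneous n p"
  shows "Expt p n (Fc j) = real (n choose j) * Qf p j"
proof -
  have "Expt p n (Fc j) = Expt p n (\<lambda>Y. \<Sum>\<sigma>\<in>Sj n j. if \<sigma> \<in> Y then 1 else 0)"
    by (rule Ex_cong) (rule Fc_sum)
  also have "\<dots> = (\<Sum>\<sigma>\<in>Sj n j. Expt p n (\<lambda>Y. if \<sigma> \<in> Y then 1 else 0))"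
    by (rule Ex_sum[OF finite_Sj])
  also have "\<dots> = (\<Sum>\<sigma>\<in>Sj n j. Qf p j)"
    by (rule sum.cong[OF refl]) (simp add: Ex_ind'[OF sub] hom_face[OF hom] Sj_def)
  also have "\<dots> = real (n choose j) * Qf p j" by (simp add: card_Sj)
  finally show ?thesis .
qed

lemma Ex_F2:
  assumes sub: "\<forall>Y\<in>set_pmf p. is_subcomplex n Y" and hom: "homogeneous n p"
    and si: "spatially_independent n p" and pos: "\<And>i. i \<le> j \<Longrightarrow> Qf p i > 0"
  shows "Expt p n (\<lambda>Y. Fc j Y ^ 2) = (\<Sum>\<sigma>\<in>Sj n j. \<Sum>\<tau>\<in>Sj n j. Qf p j * Qf p j / Qf p (card (\<sigma> \<inter> \<tau>)))"
proof -
  have "Expt p n (\<lambda>Y. Fc j Y ^ 2) = Expt p n (\<lambda>Y. \<Sum>\<sigma>\<in>Sj n j. \<Sum>\<tau>\<in>Sj n j. (if \<sigma> \<in> Y then 1 else 0) * (if \<tau> \<in> Y then 1 else 0))"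
    by (rule Ex_cong) (simp add: Fc_sum power2_eq_square sum_product)
  also have "\<dots> = (\<Sum>\<sigma>\<in>Sj n j. \<Sum>\<tau>\<in>Sj n j. Expt p n (\<lambda>Y. if \<sigma> \<in> Y \<and> \<tau> \<in> Y then 1 else 0))"
    by (simp only: Ex_sum[OF finite_Sj] mult_ind)
  also have "\<dots> = (\<Sum>\<sigma>\<in>Sj n j. \<Sum>\<tau>\<in>Sj n j. Qf p j * Qf p j / Qf p (card (\<sigma> \<inter> \<tau>)))"
  proof (intro sum.cong refl)
    fix \<sigma> \<tau> assume st: "\<sigma> \<in> Sj n j" "\<tau> \<in> Sj n j"
    have "card (\<sigma> \<inter> \<tau>) \<le> j" using st card_mono[of \<sigma> "\<sigma> \<inter> \<tau>"]
      by (auto simp: Sj_def intro: finite_subset)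
    then have "Qf p (card (\<sigma> \<inter> \<tau>)) > 0" by (rule pos)
    then show "Expt p n (\<lambda>Y. if \<sigma> \<in> Y \<and> \<tau> \<in> Y then 1 else 0) = Qf p j * Qf p j / Qf p (card (\<sigma> \<inter> \<tau>))"
      using pair_prob[OF sub hom si, of \<sigma> \<tau>] st by (simp add: Ex_ind'[OF sub] Sj_def)
  qed
  finally show ?thesis .
qed


lemma choose_le_pow: "n choose r \<le> n ^ r"
  by (cases "r \<le> n") (auto simp: binomial_le_pow binomial_eq_0)

lemma count_Ti:
  assumes \<sigma>: "\<sigma> \<in> Sj n j"
  shows "card {\<tau>\<in>Sj n j. card (\<sigma> \<inter> \<tau>) = i} \<le> 2^j * n^(j-i)"
proof -
  have fs: "finite \<sigma>" using \<sigma> by (auto simp: Sj_def intro: finite_subset)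
  have sub: "{\<tau>\<in>Sj n j. card (\<sigma> \<inter> \<tau>) = i} \<subseteq> (\<lambda>(A,B). A \<union> B) ` (Pow \<sigma> \<times> Sj n (j-i))"
  proof
    fix \<tau> assume t: "\<tau> \<in> {\<tau>\<in>Sj n j. card (\<sigma> \<inter> \<tau>) = i}"
    have ft: "finite \<tau>" using t by (auto simp: Sj_def intro: finite_subset)
    have "card (\<tau> - \<sigma>) = card \<tau> - card (\<tau> \<inter> \<sigma>)" using ft by (simp add: card_Diff_subset_Int)
    also have "\<dots> = j - i" using t by (auto simp: Sj_def Int_commute)
    finally have "\<tau> - \<sigma> \<in> Sj n (j-i)" using t by (auto simp: Sj_def)
    moreover have "\<tau> = (\<lambda>(A,B). A \<union> B) (\<sigma> \<inter> \<tau>, \<tau> - \<sigma>)" by auto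
    ultimately show "\<tau> \<in> (\<lambda>(A,B). A \<union> B) ` (Pow \<sigma> \<times> Sj n (j-i))" by blast
  qed
  have "card {\<tau>\<in>Sj n j. card (\<sigma> \<inter> \<tau>) = i} \<le> card ((\<lambda>(A,B). A \<union> B) ` (Pow \<sigma> \<times> Sj n (j-i)))"
    by (rule card_mono[OF _ sub]) (simp add: fs finite_Sj)
  also have "\<dots> \<le> card (Pow \<sigma> \<times> Sj n (j-i))" by (rule card_image_le) (simp add: fs finite_Sj)
  also have "\<dots> = 2^j * (n choose (j-i))"
    unfolding card_cartesian_product card_Sj using \<sigma> fs by (simp add: card_Pow Sj_def)
  also have "\<dots> \<le> 2^j * n^(j-i)" by (simp add: choose_le_pow)
  finally show ?thesis .
qed

lemma Ex_F2_bound: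
  assumes sub: "\<forall>Y\<in>set_pmf p. is_subcomplex n Y" and hom: "homogeneous n p"
    and si: "spatially_independent n p" and pos: "\<And>i. i \<le> j \<Longrightarrow> Qf p i > 0"
  shows "Expt p n (\<lambda>Y. Fc j Y ^ 2) \<le> real (n choose j) ^ 2 * (Qf p j * Qf p j / Qf p 0)
     + real (n choose j) * (\<Sum>i\<in>{1..j}. 2^j * real n^(j-i) * (Qf p j * Qf p j / Qf p i))"
proof -
  define g where "g i = Qf p j * Qf p j / Qf p i" for i
  have g0: "g i \<ge> 0" if "i \<le> j" for i using pos[OF that] pos[of j] by (simp add: g_def)
  define C where "C = real (n choose j)"
  have inner: "(\<Sum>\<tau>\<in>Sj n j. g (card (\<sigma> \<inter> \<tau>))) \<le> C * g 0 + (\<Sum>i\<in>{1..j}. 2^j * real n^(j-i) * g i)"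
    if \<sigma>: "\<sigma> \<in> Sj n j" for \<sigma>
  proof -
    have img: "(\<lambda>\<tau>. card (\<sigma> \<inter> \<tau>)) ` Sj n j \<subseteq> {0..j}"
    proof
      fix x assume "x \<in> (\<lambda>\<tau>. card (\<sigma> \<inter> \<tau>)) ` Sj n j"
      then obtain \<tau> where "\<tau> \<in> Sj n j" "x = card (\<sigma> \<inter> \<tau>)" by auto
      then show "x \<in> {0..j}" using \<sigma> card_mono[of \<sigma> "\<sigma> \<inter> \<tau>"]
        by (auto simp: Sj_def intro: finite_subset)
    qed
    have "(\<Sum>\<tau>\<in>Sj n j. g (card (\<sigma> \<inter> \<tau>)))
        = (\<Sum>i\<in>{0..j}. \<Sum>\<tau>\<in>{\<tau>\<in>Sj n j. card (\<sigma> \<inter> \<tau>) = i}. g (card (\<sigma> \<inter> \<tau>)))"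
      by (rule sum.group[OF finite_Sj _ img, symmetric]) simp
    also have "\<dots> = (\<Sum>i\<in>{0..j}. real (card {\<tau>\<in>Sj n j. card (\<sigma> \<inter> \<tau>) = i}) * g i)"
      by (rule sum.cong[OF refl]) simp
    also have "\<dots> = real (card {\<tau>\<in>Sj n j. card (\<sigma> \<inter> \<tau>) = 0}) * g 0
        + (\<Sum>i\<in>{1..j}. real (card {\<tau>\<in>Sj n j. card (\<sigma> \<inter> \<tau>) = i}) * g i)"
      by (subst sum.atLeast_Suc_atMost) auto
    also have "\<dots> \<le> C * g 0 + (\<Sum>i\<in>{1..j}. 2^j * real n^(j-i) * g i)"
    proof (rule add_mono)
      have "card {\<tau>\<in>Sj n j. card (\<sigma> \<inter> \<tau>) = 0} \<le> card (Sj n j)"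
        by (rule card_mono[OF finite_Sj]) blast
      then have "real (card {\<tau>\<in>Sj n j. card (\<sigma> \<inter> \<tau>) = 0}) \<le> C"
        unfolding C_def card_Sj[symmetric] by (simp only: of_nat_le_iff)
      then show "real (card {\<tau>\<in>Sj n j. card (\<sigma> \<inter> \<tau>) = 0}) * g 0 \<le> C * g 0"
        by (rule mult_right_mono) (use g0[of 0] in simp)
      show "(\<Sum>i\<in>{1..j}. real (card {\<tau>\<in>Sj n j. card (\<sigma> \<inter> \<tau>) = i}) * g i)
          \<le> (\<Sum>i\<in>{1..j}. 2^j * real n^(j-i) * g i)"
      proof (rule sum_mono)
        fix i assume "i \<in> {1..j}"
        then have "g i \<ge> 0" using g0 by auto
        moreover have "real (card {\<tau>\<in>Sj n j. card (\<sigma> \<inter> \<tau>) = i}) \<le> 2^j * real n^(j-i)"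
        proof -
          have "real (card {\<tau>\<in>Sj n j. card (\<sigma> \<inter> \<tau>) = i}) \<le> real (2^j * n^(j-i))"
            using count_Ti[OF \<sigma>, of i] by (simp only: of_nat_le_iff)
          then show ?thesis by simp
        qed
        ultimately show "real (card {\<tau>\<in>Sj n j. card (\<sigma> \<inter> \<tau>) = i}) * g i \<le> 2^j * real n^(j-i) * g i"
          by (intro mult_right_mono)
      qed
    qed
    finally show ?thesis .
  qed
  have "Expt p n (\<lambda>Y. Fc j Y ^ 2) = (\<Sum>\<sigma>\<in>Sj n j. \<Sum>\<tau>\<in>Sj n j. g (card (\<sigma> \<inter> \<tau>)))"
    unfolding g_def by (rule Ex_F2[OF sub hom si pos])
  also have "\<dots> \<le> (\<Sum>\<sigma>\<in>Sj n j. C * g 0 + (\<Sum>i\<in>{1..j}. 2^j * real n^(j-i) * g i))"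
    by (rule sum_mono) (rule inner)
  also have "\<dots> = C * (C * g 0 + (\<Sum>i\<in>{1..j}. 2^j * real n^(j-i) * g i))"
    by (simp add: card_Sj C_def)
  also have "\<dots> = C^2 * g 0 + C * (\<Sum>i\<in>{1..j}. 2^j * real n^(j-i) * g i)"
    by (simp add: algebra_simps power2_eq_square)
  finally show ?thesis unfolding g_def C_def .
qed


lemma Fc_nonneg: "Fc j Y \<ge> 0" by (simp add: Fc_def)

lemma Fc_empty: "Fc j {} = 0" by (simp add: Fc_def faces_def)

lemma markov:
  assumes sub: "\<forall>Y\<in>set_pmf p. is_subcomplex n Y" and t: "t > 0"
  shows "measure_pmf.prob p {Y. t \<le> Fc j Y} \<le> Expt p n (Fc j) / t"
proof -
  have "measure_pmf.prob p {Y. t \<le> Fc j Y} = Expt p n (\<lambda>Y. if t \<le> Fc j Y then 1 else 0)"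
    by (rule Ex_ind'[OF sub, symmetric])
  also have "\<dots> \<le> Expt p n (\<lambda>Y. (1/t) * Fc j Y)"
    by (rule Ex_mono) (use t Fc_nonneg in \<open>auto simp: field_simps\<close>)
  also have "\<dots> = Expt p n (Fc j) / t" by (subst Ex_cmult) simp
  finally show ?thesis .
qed

lemma cheb:
  assumes sub: "\<forall>Y\<in>set_pmf p. is_subcomplex n Y" and t: "t > 0"
  shows "measure_pmf.prob p {Y. {} \<in> Y \<and> t \<le> \<bar>Fc j Y - \<mu>\<bar>}
     \<le> Expt p n (\<lambda>Y. (if {} \<in> Y then 1 else 0) * (Fc j Y - \<mu>)^2) / t^2"
proof -
  have "measure_pmf.prob p {Y. {} \<in> Y \<and> t \<le> \<bar>Fc j Y - \<mu>\<bar>}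
      = Expt p n (\<lambda>Y. if {} \<in> Y \<and> t \<le> \<bar>Fc j Y - \<mu>\<bar> then 1 else 0)"
    by (rule Ex_ind'[OF sub, symmetric])
  also have "\<dots> \<le> Expt p n (\<lambda>Y. (1/t^2) * ((if {} \<in> Y then 1 else 0) * (Fc j Y - \<mu>)^2))"
  proof (rule Ex_mono)
    fix Y
    show "(if {} \<in> Y \<and> t \<le> \<bar>Fc j Y - \<mu>\<bar> then 1 else 0)
        \<le> (1/t^2) * ((if {} \<in> Y then 1 else 0) * (Fc j Y - \<mu>)^2)"
    proof (cases "{} \<in> Y \<and> t \<le> \<bar>Fc j Y - \<mu>\<bar>")
      case True
      then have "t^2 \<le> \<bar>Fc j Y - \<mu>\<bar>^2" using t by (intro power_mono) auto
      then have "t^2 \<le> (Fc j Y - \<mu>)^2" by simp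
      then show ?thesis using True t by (simp add: field_simps)
    next
      case False
      then have "(if {} \<in> Y \<and> t \<le> \<bar>Fc j Y - \<mu>\<bar> then 1 else 0) = (0::real)" by simp
      moreover have "0 \<le> (1/t^2) * ((if {} \<in> Y then 1 else 0) * (Fc j Y - \<mu>)^2)"
        by (intro mult_nonneg_nonneg) auto
      ultimately show ?thesis by simp
    qed
  qed
  also have "\<dots> = Expt p n (\<lambda>Y. (if {} \<in> Y then 1 else 0) * (Fc j Y - \<mu>)^2) / t^2"
    by (subst Ex_cmult) simp
  finally show ?thesis .
qed

lemma var_expand:
  assumes sub: "\<forall>Y\<in>set_pmf p. is_subcomplex n Y"
  shows "Expt p n (\<lambda>Y. (if {} \<in> Y then 1 else 0) * (Fc j Y - \<mu>)^2)
    = Expt p n (\<lambda>Y. Fc j Y ^ 2) - 2 * \<mu> * Expt p n (Fc j) + \<mu>^2 * Qf p 0"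
proof -
  have "Expt p n (\<lambda>Y. (if {} \<in> Y then 1 else 0) * (Fc j Y - \<mu>)^2)
      = Expt p n (\<lambda>Y. Fc j Y ^ 2 + (-2 * \<mu>) * Fc j Y + \<mu>^2 * (if {} \<in> Y then 1 else 0))"
  proof (rule Ex_cong)
    fix Y assume Y: "Y \<in> U n"
    show "(if {} \<in> Y then 1 else 0) * (Fc j Y - \<mu>)^2
        = Fc j Y ^ 2 + (-2 * \<mu>) * Fc j Y + \<mu>^2 * (if {} \<in> Y then 1 else 0)"
    proof (cases "{} \<in> Y")
      case True then show ?thesis by (simp add: power2_diff algebra_simps)
    next
      case False then have "Y = {}" using U_empty[OF Y] by simp
      then show ?thesis by (simp add: Fc_empty)
    qed
  qed
  also have "\<dots> = Expt p n (\<lambda>Y. Fc j Y ^ 2) - 2 * \<mu> * Expt p n (Fc j) + \<mu>^2 * Qf p 0"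
    unfolding Ex_add Ex_cmult Ex_ind'[OF sub] Qf_def by simp
  finally show ?thesis .
qed

lemma var_ratio:
  assumes sub: "\<forall>Y\<in>set_pmf p. is_subcomplex n Y" and hom: "homogeneous n p"
    and si: "spatially_independent n p" and pos: "\<And>i. i \<le> j \<Longrightarrow> Qf p i > 0"
    and jn: "j \<le> n" and \<delta>: "\<delta> > 0"
  shows "measure_pmf.prob p {Y. {} \<in> Y \<and> \<delta> * (real (n choose j) * Qf p j / Qf p 0) \<le> \<bar>Fc j Y - real (n choose j) * Qf p j / Qf p 0\<bar>} / Qf p 0
    \<le> (\<Sum>i\<in>{1..j}. 2^j * real n^(j-i) * Qf p 0 / (\<delta>^2 * real (n choose j) * Qf p i))"
proof -
  define C where "C = real (n choose j)"
  define q where "q = Qf p j"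
  define q0 where "q0 = Qf p 0"
  define \<mu> where "\<mu> = C * q / q0"
  define V where "V = (\<Sum>i\<in>{1..j}. 2^j * real n^(j-i) * (q * q / Qf p i))"
  have C: "C > 0" unfolding C_def using jn by simp
  have q: "q > 0" "q0 > 0" unfolding q_def q0_def using pos by auto
  have \<mu>: "\<mu> > 0" unfolding \<mu>_def using C q by simp
  have EF: "Expt p n (Fc j) = C * q" unfolding C_def q_def by (rule Ex_F[OF sub hom])
  have EF2: "Expt p n (\<lambda>Y. Fc j Y ^ 2) \<le> C^2 * (q * q / q0) + C * V"
    unfolding C_def q_def q0_def V_def by (rule Ex_F2_bound[OF sub hom si pos])
  have var: "Expt p n (\<lambda>Y. (if {} \<in> Y then 1 else 0) * (Fc j Y - \<mu>)^2) \<le> C * V"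
  proof -
    have e1: "Expt p n (\<lambda>Y. (if {} \<in> Y then 1 else 0) * (Fc j Y - \<mu>)^2)
        = Expt p n (\<lambda>Y. Fc j Y ^ 2) - 2 * \<mu> * (C * q) + \<mu>^2 * q0"
      unfolding var_expand[OF sub] EF q0_def ..
    have e2: "- 2 * \<mu> * (C * q) + \<mu>^2 * q0 = - (C^2 * (q * q / q0))"
      unfolding \<mu>_def using q by (simp add: field_simps power2_eq_square)
    show ?thesis using e1 e2 EF2 by linarith
  qed
  have "measure_pmf.prob p {Y. {} \<in> Y \<and> \<delta> * \<mu> \<le> \<bar>Fc j Y - \<mu>\<bar>} \<le> C * V / (\<delta> * \<mu>)^2"
    using cheb[OF sub, of "\<delta> * \<mu>" j \<mu>] var \<delta> \<mu>
    by (meson divide_right_mono dual_order.trans mult_pos_pos zero_le_power2)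
  then have "measure_pmf.prob p {Y. {} \<in> Y \<and> \<delta> * \<mu> \<le> \<bar>Fc j Y - \<mu>\<bar>} / q0 \<le> C * V / (\<delta> * \<mu>)^2 / q0"
    using q by (intro divide_right_mono) auto
  also have "C * V / (\<delta> * \<mu>)^2 / q0 = (q0 / (\<delta>^2 * C * q * q)) * V"
    unfolding \<mu>_def using q C \<delta> by (simp add: field_simps power2_eq_square)
  also have "\<dots> = (\<Sum>i\<in>{1..j}. 2^j * real n^(j-i) * q0 / (\<delta>^2 * C * Qf p i))"
    unfolding V_def sum_distrib_left
  proof (rule sum.cong[OF refl])
    fix i assume "i \<in> {1..j}"
    then have "Qf p i > 0" using pos by auto
    then show "q0 / (\<delta>^2 * C * q * q) * (2^j * real n^(j-i) * (q * q / Qf p i))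
        = 2^j * real n^(j-i) * q0 / (\<delta>^2 * C * Qf p i)"
      using q C \<delta> by (simp add: field_simps)
  qed
  finally show ?thesis unfolding \<mu>_def C_def q_def q0_def .
qed




lemma var_term_lim:
  fixes Q :: "nat \<Rightarrow> nat \<Rightarrow> real"
  assumes lim: "filterlim (\<lambda>n. real n ^ i * Q n i / Q n 0) at_top sequentially"
    and ev: "eventually (\<lambda>n. Q n i > 0 \<and> Q n 0 > 0) sequentially"
    and i: "1 \<le> i" "i \<le> j" and \<delta>: "\<delta> > 0"
  shows "(\<lambda>n. 2^j * real n^(j-i) * Q n 0 / (\<delta>^2 * real (n choose j) * Q n i)) \<longlonglongrightarrow> 0"
proof -
  define K where "K = 2^j * real j^j / \<delta>^2"
  have "(\<lambda>n. K * inverse (real n ^ i * Q n i / Q n 0)) \<longlonglongrightarrow> K * 0"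
    by (intro tendsto_mult tendsto_const tendsto_inverse_0_at_top[OF lim])
  then have R: "(\<lambda>n. K * inverse (real n ^ i * Q n i / Q n 0)) \<longlonglongrightarrow> 0" by simp
  show ?thesis
  proof (rule tendsto_sandwich[OF _ _ tendsto_const R])
    show "eventually (\<lambda>n. 0 \<le> 2^j * real n^(j-i) * Q n 0 / (\<delta>^2 * real (n choose j) * Q n i)) sequentially"
      using ev by eventually_elim auto
    show "eventually (\<lambda>n. 2^j * real n^(j-i) * Q n 0 / (\<delta>^2 * real (n choose j) * Q n i)
        \<le> K * inverse (real n ^ i * Q n i / Q n 0)) sequentially"
      using ev eventually_ge_at_top[of "j+1"]
    proof eventually_elim
      case (elim n)
      then have q: "Q n i > 0" "Q n 0 > 0" and nj: "j \<le> n" "n > 0" by auto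
      have j0: "real j > 0" using i by simp
      have Cb: "(real n / real j) ^ j \<le> real (n choose j)"
        using binomial_ge_n_over_k_pow_k[OF nj(1)] by simp
      have Cp: "(real n / real j) ^ j > 0" using nj j0 by simp
      have "2^j * real n^(j-i) * Q n 0 / (\<delta>^2 * real (n choose j) * Q n i)
          \<le> 2^j * real n^(j-i) * Q n 0 / (\<delta>^2 * (real n / real j) ^ j * Q n i)"
        using Cb Cp q \<delta> nj by (intro divide_left_mono mult_right_mono mult_left_mono mult_pos_pos) auto
      also have "\<dots> = K * inverse (real n ^ i * Q n i / Q n 0)"
      proof -
        have "real n ^ j = real n ^ (j-i) * real n ^ i" using i by (simp add: power_add[symmetric])
        then show ?thesis unfolding K_def using q nj j0 \<delta>
          by (simp add: field_simps power_divide)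
      qed
      finally show ?case .
    qed
  qed
qed


lemma binom_ratio: "Suc k * (n choose Suc k) = (n - k) * (n choose k)"
  by (metis binomial_absorption binomial_absorb_comp)

lemma binom_ratio_real: "real (Suc k) * real (n choose Suc k) = real (n - k) * real (n choose k)"
  using binom_ratio[of k n] by (metis of_nat_mult)

lemma key_arith:
  fixes F0 F1 F2 b \<mu>1 \<mu>2 \<delta> c' \<epsilon> :: real
  assumes \<delta>: "\<delta> > 0" "\<delta> \<le> 1/2" "\<delta> \<le> \<epsilon> / (4 * (c' + 3 + \<epsilon>))" and c': "c' > 0" and \<epsilon>: "\<epsilon> > 0"
    and \<mu>: "\<mu>1 > 0" "\<mu>2 \<le> (c' + \<delta>) * \<mu>1" "\<mu>2 \<ge> 0"
    and F: "\<bar>F1 - \<mu>1\<bar> < \<delta> * \<mu>1" "\<bar>F2 - \<mu>2\<bar> < \<delta> * \<mu>2" "F0 < \<delta> * \<mu>1"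
    and b: "b \<ge> F1 - F0 - F2"
  shows "F1 > 0" "b / F1 \<ge> 1 - c' - \<epsilon>"
proof -
  have F1: "F1 > (1 - \<delta>) * \<mu>1" using F(1) by (simp add: algebra_simps abs_less_iff)
  moreover have "(1 - \<delta>) * \<mu>1 > 0" using \<delta> \<mu> by simp
  ultimately show F1p: "F1 > 0" by linarith
  have F2: "F2 < (1 + \<delta>) * ((c' + \<delta>) * \<mu>1)"
  proof -
    have "F2 < (1 + \<delta>) * \<mu>2" using F(2) by (simp add: algebra_simps abs_less_iff)
    also have "\<dots> \<le> (1 + \<delta>) * ((c' + \<delta>) * \<mu>1)" using \<mu> \<delta> by (intro mult_left_mono) auto
    finally show ?thesis .
  qed
  have K: "\<delta> * (2 + 2 * c' + \<delta> + \<epsilon>) \<le> \<epsilon>"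
  proof -
    have pos: "4 * (c' + 3 + \<epsilon>) > 0" using c' \<epsilon> by simp
    have "\<delta> * (2 + 2 * c' + \<delta> + \<epsilon>) \<le> \<delta> * (4 * (c' + 3 + \<epsilon>))"
      using \<delta> c' \<epsilon> by (intro mult_left_mono) auto
    also have "\<dots> \<le> \<epsilon> / (4 * (c' + 3 + \<epsilon>)) * (4 * (c' + 3 + \<epsilon>))"
      using \<delta> pos by (intro mult_right_mono) auto
    also have "\<dots> = \<epsilon>" using pos by simp
    finally show ?thesis .
  qed
  have N: "\<delta> + (1 + \<delta>) * (c' + \<delta>) \<le> (c' + \<epsilon>) * (1 - \<delta>)"
  proof -
    have e1: "\<delta> + (1 + \<delta>) * (c' + \<delta>) = c' + \<delta> * (2 + c' + \<delta>)" by (simp add: ring_distribs)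
    have e2: "(c' + \<epsilon>) * (1 - \<delta>) = c' + \<epsilon> - \<delta> * (c' + \<epsilon>)" by (simp add: ring_distribs)
    have e3: "\<delta> * (2 + 2 * c' + \<delta> + \<epsilon>) = \<delta> * (2 + c' + \<delta>) + \<delta> * (c' + \<epsilon>)" by (simp add: ring_distribs)
    show ?thesis unfolding e1 e2 using K e3 by linarith
  qed
  have "F0 + F2 < (\<delta> + (1 + \<delta>) * (c' + \<delta>)) * \<mu>1" using F(3) F2 by (simp add: algebra_simps)
  also have "\<dots> \<le> ((c' + \<epsilon>) * (1 - \<delta>)) * \<mu>1" using N \<mu> by (intro mult_right_mono) auto
  also have "\<dots> = (c' + \<epsilon>) * ((1 - \<delta>) * \<mu>1)" by simp
  also have "\<dots> \<le> (c' + \<epsilon>) * F1" using F1 c' \<epsilon> by (intro mult_left_mono) auto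
  finally have "F0 + F2 < (c' + \<epsilon>) * F1" .
  moreover have "(1 - c' - \<epsilon>) * F1 = F1 - (c' + \<epsilon>) * F1" by (simp add: ring_distribs)
  ultimately have "b \<ge> (1 - c' - \<epsilon>) * F1" using b by linarith
  then show "b / F1 \<ge> 1 - c' - \<epsilon>" using F1p by (simp add: le_divide_eq)
qed

lemma p3_alg:
  fixes P q0 qk qk1 Ck Ck1 \<delta> :: real and n k :: nat
  assumes pos: "q0 > 0" "qk > 0" "qk1 > 0" "\<delta> > 0" "Ck1 > 0"
    and id: "real (Suc k) * Ck1 = real (n - k) * Ck" and nk: "2 * k + 1 \<le> n"
    and P: "P \<le> (Ck * qk) / (\<delta> * (Ck1 * qk1 / q0))"
  shows "P / q0 \<le> 2 * real (k+1) / \<delta> * inverse (real n * (qk1 / qk))"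
proof -
  have nk': "real (n - k) > 0" using nk by simp
  have Ck: "Ck = real (Suc k) * Ck1 / real (n - k)" using id nk' by (simp add: field_simps)
  have "P / q0 \<le> (Ck * qk) / (\<delta> * (Ck1 * qk1 / q0)) / q0"
    using P pos by (intro divide_right_mono) auto
  also have "\<dots> = real (Suc k) * qk / (\<delta> * qk1) * (1 / real (n - k))"
    unfolding Ck using pos nk' by (simp add: field_simps)
  also have "\<dots> \<le> real (Suc k) * qk / (\<delta> * qk1) * (2 / real n)"
  proof (rule mult_left_mono)
    have "real n \<le> 2 * real (n - k)" using nk by (simp add: of_nat_diff)
    then show "1 / real (n - k) \<le> 2 / real n" using nk' nk by (simp add: field_simps)
  qed (use pos in simp)
  also have "\<dots> = 2 * real (k+1) / \<delta> * inverse (real n * (qk1 / qk))"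
    using pos nk by (simp add: field_simps)
  finally show ?thesis .
qed

lemma mu_alg:
  fixes q0 q1 q2 C1 C2 \<delta> c :: real and n k :: nat
  assumes pos: "q0 > 0" "q1 > 0" "q2 \<ge> 0" "C1 \<ge> 0" "\<delta> > 0"
    and id: "real (Suc (Suc k)) * C2 = real (n - Suc k) * C1"
    and R: "real n * (q2 / q1) < c + \<delta> * real (k+2)"
  shows "C2 * q2 / q0 \<le> (c / real (k+2) + \<delta>) * (C1 * q1 / q0)"
proof -
  have kp: "real (Suc (Suc k)) > 0" by simp
  have C2: "C2 = real (n - Suc k) * C1 / real (Suc (Suc k))" using id kp by (simp add: field_simps)
  have nn: "real (n - Suc k) \<le> real n" by simp
  have "real (n - Suc k) * C1 / real (Suc (Suc k)) \<le> real n * C1 / real (k+2)"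
    using mult_right_mono[OF nn pos(4)] by (simp add: divide_right_mono)
  then have "C2 * q2 / q0 \<le> real n * C1 / real (k+2) * q2 / q0"
    unfolding C2 using pos by (intro divide_right_mono mult_right_mono) auto
  also have "\<dots> = (real n * (q2 / q1)) / real (k+2) * (C1 * q1 / q0)"
  proof -
    have "real (k+2) \<noteq> 0" by simp
    then show ?thesis using pos by (simp add: divide_simps)
  qed
  also have "\<dots> \<le> (c + \<delta> * real (k+2)) / real (k+2) * (C1 * q1 / q0)"
    using R pos by (intro mult_right_mono divide_right_mono) auto
  also have "(c + \<delta> * real (k+2)) / real (k+2) = c / real (k+2) + \<delta>"
    by (simp add: field_simps)
  finally show ?thesis .
qed

theorem lemma5p5:
  fixes k :: nat and c :: real and X :: "nat \<Rightarrow> nat set set pmf"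
  assumes "c > 0"
    and "\<And>n. \<forall>Y\<in>set_pmf (X n). is_subcomplex n Y"
    and "\<And>n. homogeneous n (X n)"
    and "\<And>n. spatially_independent n (X n)"
    and "filterlim (\<lambda>n. real n ^ (k + 1) * qprob (X n) k) at_top sequentially"
    and "(\<lambda>n. real n * rprob (X n) k) \<longlonglongrightarrow> c"
  shows "\<forall>\<epsilon>>0. (\<lambda>n.
      measure_pmf.prob (X n)
        {Y. real (betti k Y) / real (fnum k Y) < 1 - c / real (k + 2) - \<epsilon> \<and> dim_ge Y k}
      / measure_pmf.prob (X n) {Y. dim_ge Y k}) \<longlonglongrightarrow> 0"
proof (intro allI impI)
  fix \<epsilon> :: real assume \<epsilon>: "\<epsilon> > 0"
  note c = assms(1) and sub = assms(2) and hom = assms(3) and si = assms(4)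
  define Q where "Q n j = Qf (X n) j" for n j
  have Qmono: "Q n j' \<le> Q n j" if "j \<le> j'" for n j j'
    unfolding Q_def Qf_def
    by (rule prob_mono[OF sub]) (use that in \<open>auto intro: U_down[where \<sigma>="{0..<j'}"]\<close>)
  have Qnn: "Q n j \<ge> 0" for n j unfolding Q_def Qf_def by simp
  have Q01: "Q n 0 \<le> 1" for n unfolding Q_def Qf_def by simp
  have Qq: "qprob (X n) k = Q n (k+1)" for n unfolding qprob_def Q_def Qf_def by simp
  have Qr: "rprob (X n) k = Q n (k+2) / Q n (k+1)" for n
  proof -
    have "measure_pmf.prob (X n) {Z. {0..<k+2} \<in> Z \<and> {0..<k+1} \<in> Z} = Q n (k+2)"
      unfolding Q_def Qf_def
      by (rule prob_cong[OF sub]) (auto intro: U_down[where \<sigma>="{0..<k+2}"])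
    then show ?thesis unfolding rprob_def Q_def Qf_def by simp
  qed
  have L1: "filterlim (\<lambda>n. real n ^ (k+1) * Q n (k+1)) at_top sequentially"
    using assms(5) unfolding Qq .
  have L2: "(\<lambda>n. real n * (Q n (k+2) / Q n (k+1))) \<longlonglongrightarrow> c"
    using assms(6) unfolding Qr .
  have evQ: "eventually (\<lambda>n. k+3 \<le> n \<and> (\<forall>j\<le>k+2. Q n j > 0)) sequentially"
  proof -
    have "eventually (\<lambda>n. c/2 < real n * (Q n (k+2) / Q n (k+1))) sequentially"
      using L2 c by (intro order_tendstoD(1)) auto
    then show ?thesis using eventually_ge_at_top[of "k+3"]
    proof eventually_elim
      case (elim n)
      have "Q n (k+2) \<noteq> 0" using elim c by auto
      then have "Q n (k+2) > 0" using Qnn[of n "k+2"] by simp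
      then show ?case using elim Qmono[of _ "k+2" n] by (auto intro: less_le_trans)
    qed
  qed
  have evAs: "eventually (\<lambda>n. (\<forall>j \<le> k+2. Q n j > 0) \<and> Q n 0 \<le> 1
      \<and> (\<forall>m. 1 \<le> m \<longrightarrow> m \<le> k+1 \<longrightarrow> Q n (m+1) * Q n (m-1) \<le> Q n m ^ 2)
      \<and> (\<forall>m. 2 \<le> m \<longrightarrow> m \<le> k+1 \<longrightarrow> Q n (m+1) * Q n (m-1)^3 \<le> Q n m ^ 3 * Q n (m-2))) sequentially"
    using evQ
  proof eventually_elim
    case (elim n)
    show ?case
    proof (intro conjI)
      show "\<forall>j\<le>k+2. Q n j > 0" using elim by auto
      show "Q n 0 \<le> 1" by (rule Q01)
    next
      show "\<forall>m. 1 \<le> m \<longrightarrow> m \<le> k+1 \<longrightarrow> Q n (m+1) * Q n (m-1) \<le> Q n m ^ 2"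
      proof (intro allI impI)
        fix m assume that: "1 \<le> m" "m \<le> k+1"
        show "Q n (m+1) * Q n (m-1) \<le> Q n m ^ 2"
          unfolding Q_def by (rule Q_pair[OF sub hom si]) (use that elim in \<open>auto simp: Q_def\<close>)
      qed
    next
      show "\<forall>m. 2 \<le> m \<longrightarrow> m \<le> k+1 \<longrightarrow> Q n (m+1) * Q n (m-1)^3 \<le> Q n m ^ 3 * Q n (m-2)"
      proof (intro allI impI)
        fix m assume that: "2 \<le> m" "m \<le> k+1"
        show "Q n (m+1) * Q n (m-1)^3 \<le> Q n m ^ 3 * Q n (m-2)"
          unfolding Q_def by (rule Q_triple[OF sub hom si]) (use that elim in \<open>auto simp: Q_def\<close>)
      qed
    qed
  qed
  note AS = asym_limits[OF c evAs L1 L2]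
  show "(\<lambda>n. measure_pmf.prob (X n)
        {Y. real (betti k Y) / real (fnum k Y) < 1 - c / real (k + 2) - \<epsilon> \<and> dim_ge Y k}
      / measure_pmf.prob (X n) {Y. dim_ge Y k}) \<longlonglongrightarrow> 0"
  proof -
    define c' where "c' = c / real (k+2)"
    have c': "c' > 0" unfolding c'_def using c by simp
    define \<delta> where "\<delta> = min (1/2) (\<epsilon> / (4 * (c' + 3 + \<epsilon>)))"
    have \<delta>: "\<delta> > 0" "\<delta> \<le> 1/2" "\<delta> \<le> \<epsilon> / (4 * (c' + 3 + \<epsilon>))"
      unfolding \<delta>_def using \<epsilon> c' by auto
    define \<mu>1 where "\<mu>1 n = real (n choose (k+1)) * Q n (k+1) / Q n 0" for n
    define \<mu>2 where "\<mu>2 n = real (n choose (k+2)) * Q n (k+2) / Q n 0" for n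
    define E1 where "E1 n = {Y. {} \<in> Y \<and> \<delta> * \<mu>1 n \<le> \<bar>Fc (k+1) Y - \<mu>1 n\<bar>}" for n
    define E2 where "E2 n = {Y. {} \<in> Y \<and> \<delta> * \<mu>2 n \<le> \<bar>Fc (k+2) Y - \<mu>2 n\<bar>}" for n
    define E3 where "E3 n = {Y. \<delta> * \<mu>1 n \<le> Fc k Y}" for n
    define P1 where "P1 n = measure_pmf.prob (X n) (E1 n)" for n
    define P2 where "P2 n = measure_pmf.prob (X n) (E2 n)" for n
    define P3 where "P3 n = measure_pmf.prob (X n) (E3 n)" for n
    define B where "B = {Y. real (betti k Y) / real (fnum k Y) < 1 - c / real (k + 2) - \<epsilon> \<and> dim_ge Y k}"
    define D where "D = {Y. dim_ge Y k}"
    have limVar: "(\<lambda>n. measure_pmf.prob (X n) {Y. {} \<in> Y \<and> \<delta> * (real (n choose j) * Q n j / Q n 0)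
            \<le> \<bar>Fc j Y - real (n choose j) * Q n j / Q n 0\<bar>} / Q n 0) \<longlonglongrightarrow> 0"
      if j: "1 \<le> j" "j \<le> k+2" for j
    proof (rule tendsto_sandwich[OF _ _ tendsto_const])
      show "eventually (\<lambda>n. 0 \<le> measure_pmf.prob (X n) {Y. {} \<in> Y \<and> \<delta> * (real (n choose j) * Q n j / Q n 0)
            \<le> \<bar>Fc j Y - real (n choose j) * Q n j / Q n 0\<bar>} / Q n 0) sequentially"
        using Qnn by simp
      show "eventually (\<lambda>n. measure_pmf.prob (X n) {Y. {} \<in> Y \<and> \<delta> * (real (n choose j) * Q n j / Q n 0)
            \<le> \<bar>Fc j Y - real (n choose j) * Q n j / Q n 0\<bar>} / Q n 0
          \<le> (\<Sum>i\<in>{1..j}. 2^j * real n^(j-i) * Q n 0 / (\<delta>^2 * real (n choose j) * Q n i))) sequentially"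
        using evQ
      proof eventually_elim
        case (elim n)
        show ?case unfolding Q_def
          by (rule var_ratio[OF sub hom si _ _ \<delta>(1)]) (use elim j in \<open>auto simp: Q_def\<close>)
      qed
      show "(\<lambda>n. \<Sum>i\<in>{1..j}. 2^j * real n^(j-i) * Q n 0 / (\<delta>^2 * real (n choose j) * Q n i)) \<longlonglongrightarrow> 0"
      proof (rule tendsto_null_sum)
        fix i assume i: "i \<in> {1..j}"
        show "(\<lambda>n. 2^j * real n^(j-i) * Q n 0 / (\<delta>^2 * real (n choose j) * Q n i)) \<longlonglongrightarrow> 0"
        proof (rule var_term_lim[where Q=Q])
          show "filterlim (\<lambda>n. real n ^ i * Q n i / Q n 0) at_top sequentially"
            by (rule AS(2)) (use i j in auto)
          show "eventually (\<lambda>n. Q n i > 0 \<and> Q n 0 > 0) sequentially"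
            using evQ by eventually_elim (use i j in auto)
        qed (use i j \<delta> in auto)
      qed
    qed
    have limP1: "(\<lambda>n. P1 n / Q n 0) \<longlonglongrightarrow> 0"
      unfolding P1_def E1_def \<mu>1_def using limVar[of "k+1"] by simp
    have limP2: "(\<lambda>n. P2 n / Q n 0) \<longlonglongrightarrow> 0"
      unfolding P2_def E2_def \<mu>2_def using limVar[of "k+2"] by simp
    have limP3: "(\<lambda>n. P3 n / Q n 0) \<longlonglongrightarrow> 0"
    proof (rule tendsto_sandwich[OF _ _ tendsto_const])
      show "eventually (\<lambda>n. 0 \<le> P3 n / Q n 0) sequentially" using Qnn by (simp add: P3_def)
      have "(\<lambda>n. 2 * real (k+1) / \<delta> * inverse (real n * (Q n (k+1) / Q n k))) \<longlonglongrightarrow> 2 * real (k+1) / \<delta> * 0"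
        by (intro tendsto_mult tendsto_const tendsto_inverse_0_at_top[OF AS(1)])
      then show "(\<lambda>n. 2 * real (k+1) / \<delta> * inverse (real n * (Q n (k+1) / Q n k))) \<longlonglongrightarrow> 0" by simp
      show "eventually (\<lambda>n. P3 n / Q n 0 \<le> 2 * real (k+1) / \<delta> * inverse (real n * (Q n (k+1) / Q n k))) sequentially"
        using evQ eventually_ge_at_top[of "2*k+1"]
      proof eventually_elim
        case (elim n)
        have qp: "Q n 0 > 0" "Q n k > 0" "Q n (k+1) > 0" using elim by auto
        have Cp: "real (n choose (k+1)) > 0" using elim by simp
        have mp: "\<delta> * \<mu>1 n > 0" unfolding \<mu>1_def using qp Cp \<delta> by simp
        have "P3 n \<le> Expt (X n) n (Fc k) / (\<delta> * \<mu>1 n)"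
          unfolding P3_def E3_def by (rule markov[OF sub mp])
        also have "Expt (X n) n (Fc k) = real (n choose k) * Q n k"
          unfolding Q_def by (rule Ex_F[OF sub hom])
        finally have P: "P3 n \<le> real (n choose k) * Q n k / (\<delta> * (real (n choose (k+1)) * Q n (k+1) / Q n 0))"
          unfolding \<mu>1_def .
        show ?case
          by (rule p3_alg[OF qp \<delta>(1) Cp _ _ P]) (use binom_ratio_real[of k n] elim in auto)
      qed
    qed
    have evR: "eventually (\<lambda>n. real n * (Q n (k+2) / Q n (k+1)) < c + \<delta> * real (k+2)) sequentially"
      using L2 \<delta>(1) by (intro order_tendstoD(2)) auto
    have evB: "eventually (\<lambda>n. measure_pmf.prob (X n) B \<le> P1 n + P2 n + P3 n
        \<and> Q n 0 - P1 n \<le> measure_pmf.prob (X n) D \<and> Q n 0 > 0) sequentially"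
      using evQ evR
    proof eventually_elim
      case (elim n)
      have qp: "\<And>j. j \<le> k+2 \<Longrightarrow> Q n j > 0" using elim by auto
      have C1p: "real (n choose (k+1)) > 0" using elim by simp
      have mu1: "\<mu>1 n > 0" unfolding \<mu>1_def using qp[of 0] qp[of "k+1"] C1p by simp
      have mu2: "\<mu>2 n \<ge> 0" unfolding \<mu>2_def using qp[of 0] qp[of "k+2"] by simp
      have mu21: "\<mu>2 n \<le> (c' + \<delta>) * \<mu>1 n"
        unfolding \<mu>2_def \<mu>1_def c'_def
        by (rule mu_alg[where k=k and n=n]) (use qp[of 0] qp[of "k+1"] qp[of "k+2"] \<delta>(1) elim
            binom_ratio_real[of "Suc k" n] in \<open>auto simp: Qnn\<close>)
      have F1pos: "Fc (k+1) Y > 0" if "\<bar>Fc (k+1) Y - \<mu>1 n\<bar> < \<delta> * \<mu>1 n" for Y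
      proof -
        have "Fc (k+1) Y > (1 - \<delta>) * \<mu>1 n" using that by (simp add: algebra_simps abs_less_iff)
        moreover have "(1 - \<delta>) * \<mu>1 n > 0" using \<delta> mu1 by simp
        ultimately show ?thesis by linarith
      qed
      have dimF: "dim_ge Y k" if "Fc (k+1) Y > 0" for Y
      proof -
        have "faces Y (k+1) \<noteq> {}" using that by (auto simp: Fc_def)
        then obtain \<sigma> where "\<sigma> \<in> Y" "card \<sigma> = k+1" by (auto simp: faces_def)
        then show ?thesis unfolding dim_ge_def by (intro bexI[of _ \<sigma>]) auto
      qed
      have claimA: "Y \<in> E1 n \<union> E2 n \<union> E3 n" if Y: "Y \<in> U n" "Y \<in> B" for Y
      proof (rule ccontr)
        assume nE: "Y \<notin> E1 n \<union> E2 n \<union> E3 n"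
        from Y(2) obtain \<sigma> where "\<sigma> \<in> Y" unfolding B_def dim_ge_def by auto
        then have e: "{} \<in> Y" using U_down[OF Y(1)] by blast
        have F: "\<bar>Fc (k+1) Y - \<mu>1 n\<bar> < \<delta> * \<mu>1 n" "\<bar>Fc (k+2) Y - \<mu>2 n\<bar> < \<delta> * \<mu>2 n"
            "Fc k Y < \<delta> * \<mu>1 n"
          using nE e unfolding E1_def E2_def E3_def by auto
        have b: "real (betti k Y) \<ge> Fc (k+1) Y - Fc k Y - Fc (k+2) Y"
          using betti_lower[OF U_fin[OF Y(1)], of k] unfolding Fc_def by simp
        have "real (betti k Y) / Fc (k+1) Y \<ge> 1 - c' - \<epsilon>"
          by (rule key_arith(2)[OF \<delta> c' \<epsilon> mu1 mu21 mu2 F b])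
        moreover have "real (fnum k Y) = Fc (k+1) Y" by (simp add: fnum_def Fc_def faces_def)
        ultimately show False using Y(2) unfolding B_def c'_def by auto
      qed
      have claimD: "Y \<in> D \<union> E1 n" if Y: "Y \<in> U n" "Y \<in> {Y. {} \<in> Y}" for Y
      proof (cases "Y \<in> E1 n")
        case False
        then have "\<bar>Fc (k+1) Y - \<mu>1 n\<bar> < \<delta> * \<mu>1 n" using Y(2) unfolding E1_def by auto
        then show ?thesis using dimF F1pos unfolding D_def by auto
      qed simp
      have "measure_pmf.prob (X n) B \<le> measure_pmf.prob (X n) (E1 n \<union> E2 n \<union> E3 n)"
        by (rule prob_mono[OF sub]) (rule claimA)
      also have "\<dots> \<le> measure_pmf.prob (X n) (E1 n \<union> E2 n) + P3 n"
        unfolding P3_def by (rule measure_subadditive) (auto simp: measure_pmf.emeasure_eq_measure)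
      also have "measure_pmf.prob (X n) (E1 n \<union> E2 n) \<le> P1 n + P2 n"
        unfolding P1_def P2_def by (rule measure_subadditive) (auto simp: measure_pmf.emeasure_eq_measure)
      finally have A: "measure_pmf.prob (X n) B \<le> P1 n + P2 n + P3 n" by simp
      have "Q n 0 = measure_pmf.prob (X n) {Y. {} \<in> Y}" unfolding Q_def Qf_def by simp
      also have "\<dots> \<le> measure_pmf.prob (X n) (D \<union> E1 n)"
        by (rule prob_mono[OF sub]) (rule claimD)
      also have "\<dots> \<le> measure_pmf.prob (X n) D + P1 n"
        unfolding P1_def by (rule measure_subadditive) (auto simp: measure_pmf.emeasure_eq_measure)
      finally have Dd: "Q n 0 - P1 n \<le> measure_pmf.prob (X n) D" by simp
      show ?case using A Dd qp[of 0] by simp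
    qed
    have limx: "(\<lambda>n. ((P1 n + P2 n + P3 n) / Q n 0) / (1 - P1 n / Q n 0)) \<longlonglongrightarrow> 0"
    proof -
      have "(\<lambda>n. P1 n / Q n 0 + P2 n / Q n 0 + P3 n / Q n 0) \<longlonglongrightarrow> 0 + 0 + 0"
        by (intro tendsto_add limP1 limP2 limP3)
      moreover have "(\<lambda>n. 1 - P1 n / Q n 0) \<longlonglongrightarrow> 1 - 0" by (intro tendsto_diff tendsto_const limP1)
      ultimately have "(\<lambda>n. (P1 n / Q n 0 + P2 n / Q n 0 + P3 n / Q n 0) / (1 - P1 n / Q n 0)) \<longlonglongrightarrow> (0 + 0 + 0) / (1 - 0)"
        by (intro tendsto_divide) auto
      then show ?thesis by (simp add: add_divide_distrib)
    qed
    have evy: "eventually (\<lambda>n. P1 n / Q n 0 < 1/2) sequentially"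
      using limP1 by (intro order_tendstoD(2)) auto
    show ?thesis
    proof (rule tendsto_sandwich[OF _ _ tendsto_const limx])
      show "eventually (\<lambda>n. 0 \<le> measure_pmf.prob (X n) {Y. real (betti k Y) / real (fnum k Y) < 1 - c / real (k + 2) - \<epsilon> \<and> dim_ge Y k}
          / measure_pmf.prob (X n) {Y. dim_ge Y k}) sequentially" by simp
      show "eventually (\<lambda>n. measure_pmf.prob (X n) {Y. real (betti k Y) / real (fnum k Y) < 1 - c / real (k + 2) - \<epsilon> \<and> dim_ge Y k}
          / measure_pmf.prob (X n) {Y. dim_ge Y k} \<le> ((P1 n + P2 n + P3 n) / Q n 0) / (1 - P1 n / Q n 0)) sequentially"
        using evB evy
      proof eventually_elim
        case (elim n)
        then have q0: "Q n 0 > 0" by simp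
        have y: "P1 n / Q n 0 < 1/2" using elim by simp
        have "Q n 0 * (1 - P1 n / Q n 0) = Q n 0 - P1 n" using q0 by (simp add: field_simps)
        then have den: "Q n 0 * (1 - P1 n / Q n 0) \<le> measure_pmf.prob (X n) D" using elim by simp
        have dpos: "Q n 0 * (1 - P1 n / Q n 0) > 0" using q0 y by simp
        have "measure_pmf.prob (X n) B / measure_pmf.prob (X n) D
            \<le> (P1 n + P2 n + P3 n) / (Q n 0 * (1 - P1 n / Q n 0))"
          using elim den dpos by (intro frac_le) (auto simp: P1_def P2_def P3_def)
        also have "\<dots> = ((P1 n + P2 n + P3 n) / Q n 0) / (1 - P1 n / Q n 0)" by simp
        finally show ?case unfolding B_def D_def .
      qed
    qed
  qed
qed


end
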